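(* Let $G$ be a finite group, let $p$ be a prime, and let $A$ be a subgroup of $G$ of maximum order among the self-centralizing subgroups of $G$ (i.e. among subgroups $B\le G$ with $C_G(B)=B$). Then: \begin{enumerate} \item If $G$ is abelian, then $\mathcal{CD}(G)=\{G\}$. \item If $|G:Z(G)|=p^2$, then $\mathcal{CD}(G)=\{Z(G),A,A_1,\dots,A_p,G\}$ is a quasi-antichain of width $p+1$, with each $A_i$ abelian. \item If $|G:A|=p$ and $|G:Z(G)|=p^i$ with $i>2$, then $\mathcal{CD}(G)=\{A\}$. Also, if $p$ is the smallest prime divisor of $|G|$, $|G:A|=p$ and $|G:Z(G)|>p^2$, then $\mathcal{CD}(G)=\{A\}$. \item Suppose $|G:A|=p^2$. \begin{enumerate} \item If $|G:Z(G)|=p^3$, then $\mathcal{CD}(G)=\{Z(G),G\}$. Also, if $p$ is the smallest prime divisor of $|G|$ and $p^2<|G:Z(G)|<p^4$, then $\mathcal{CD}(G)=\{Z(G),G\}$. \item If $|G:Z(G)|=p^4$, then $$\mathcal{CD}(G)=\{Z(G),Z(T_1),\dots,Z(T_n),A,A_1,\dots,A_m,T_1,\dots,T_n,G\},$$ where $T_1,\dots,T_n$ ($n\ge 0$) are all of the subgroups of index $p$ in $G$ whose centers have index $p^3$ in $G$, and $A_1,\dots,A_m$ ($m\ge 0$) are all of the subgroups of index $p^2$ in $G$, other than $A$, whose centralizers in $G$ have index $p^2$ in $G$. Furthermore, if $n\ge 1$ then $m\ge p$. \item If $|G:Z(G)|=p^i$ with $i>4$ and $G$ possesses a subgroup $T$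 of index $p$ in $G$ whose center has index $p^3$ in $G$, then $\mathcal{CD}(G)=\{Z(T),A,A_1,\dots,A_p,T\}$ is a quasi-antichain of width $p+1$, with each $A_i$ abelian. Also, if $p$ is the smallest prime divisor of $|G|$, $|G:Z(G)|>p^4$, and $G$ possesses a subgroup $T$ of index $p$ in $G$ whose center has index $p^3$ in $G$, then $\mathcal{CD}(G)=\{Z(T),A,A_1,\dots,A_p,T\}$ is a quasi-antichain of width $p+1$, with each $A_i$ abelian. \item If $|G:Z(G)|=p^i$ with $i>4$ and $G$ does not possess a subgroup of index $p$ in $G$ whose center has index $p^3$ in $G$, then $\mathcal{CD}(G)=\{A\}$. Also, if $p$ is the smallest prime divisor of $|G|$, $|G:Z(G)|>p^4$, and $G$ does not possess a subgroup of index $p$ in $G$ whose center has index $p^3$ in $G$, then $\mathcal{CD}(G)=\{A\}$. \end{enumerate} \end{enumerate}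
   Context: For a finite group $G$ and $H\le G$, the Chermak-Delgado measure is $m_G(H)=|H|\,|C_G(H)|$. Let $m^*(G)=\max\{m_G(H)\mid H\le G\}$ and $\mathcal{CD}(G)=\{H\le G\mid m_G(H)=m^*(G)\}$, the Chermak-Delgado lattice of $G$ (a sublattice of the subgroup lattice of $G$). A lattice is a quasi-antichain of width $w$ if it consists of a least element, a greatest element, and $w$ further pairwise incomparable elements. *)

theory Defs
  imports "HOL-Algebra.Algebra"
begin

definition centralizer :: "('a, 'b) monoid_scheme \<Rightarrow> 'a set \<Rightarrow> 'a set" where
  "centralizer G H = {g \<in> carrier G. \<forall>h\<in>H. g \<otimes>\<^bsub>G\<^esub> h = h \<otimes>\<^bsub>G\<^esub> g}"

definition grp_center :: "('a, 'b) monoid_scheme \<Rightarrow> 'a set" where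
  "grp_center G = {g \<in> carrier G. \<forall>h\<in>carrier G. g \<otimes>\<^bsub>G\<^esub> h = h \<otimes>\<^bsub>G\<^esub> g}"

definition sub_center :: "('a, 'b) monoid_scheme \<Rightarrow> 'a set \<Rightarrow> 'a set" where
  "sub_center G H = grp_center (G\<lparr>carrier := H\<rparr>)"

definition cd_measure :: "('a, 'b) monoid_scheme \<Rightarrow> 'a set \<Rightarrow> nat" where
  "cd_measure G H = card H * card (centralizer G H)"

definition cd_max :: "('a, 'b) monoid_scheme \<Rightarrow> nat" where
  "cd_max G = Max {cd_measure G H | H. subgroup H G}"

definition CD :: "('a, 'b) monoid_scheme \<Rightarrow> 'a set set" where
  "CD G = {H. subgroup H G \<and> cd_measure G H = cd_max G}"

definition quasi_antichain :: "'a set set \<Rightarrow> nat \<Rightarrow> bool" where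
  "quasi_antichain L w \<longleftrightarrow>
     (\<exists>lo hi. lo \<in> L \<and> hi \<in> L \<and> lo \<noteq> hi \<and>
        (\<forall>x\<in>L. lo \<subseteq> x \<and> x \<subseteq> hi) \<and>
        finite (L - {lo, hi}) \<and> card (L - {lo, hi}) = w \<and>
        (\<forall>x\<in>(L - {lo, hi}). \<forall>y\<in>(L - {lo, hi}). x \<subseteq> y \<longrightarrow> x = y))"

definition smallest_prime_divisor :: "nat \<Rightarrow> nat \<Rightarrow> bool" where
  "smallest_prime_divisor p n \<longleftrightarrow> Factorial_Ring.prime p \<and> p dvd n \<and> (\<forall>q::nat. Factorial_Ring.prime q \<longrightarrow> q dvd n \<longrightarrow> p \<le> q)"

end

theory Submission
  imports Defs
begin

lemma ar3:
  fixes p h k n :: nat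
  assumes a: "p^2*h \<le> k" and b: "p*k \<le> n"
  shows "p^4*(h*k) \<le> n^2"
    and "p^4*(h*k) = n^2 \<Longrightarrow> k > 0 \<Longrightarrow> p > 0 \<Longrightarrow> p^2*h = k \<and> p*k = n"
proof -
  have e: "p^4*(h*k) = (p^2*h)*(p^2*k)" by (simp add: power2_eq_square power4_eq_xxxx algebra_simps)
  have e2: "k*(p^2*k) = (p*k)^2" by (simp add: power2_eq_square algebra_simps)
  have 1: "(p^2*h)*(p^2*k) \<le> k*(p^2*k)" using a by (rule mult_le_mono1)
  have 2: "(p*k)^2 \<le> n^2" using b by (rule power_mono) simp
  show "p^4*(h*k) \<le> n^2" using 1 2 e e2 by linarith
  assume eq: "p^4*(h*k) = n^2" and k: "k > 0" and p: "p > 0"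
  have pk: "p^2*k > 0" using k p by simp
  have c1: "p^2*h = k"
  proof (rule ccontr)
    assume "p^2*h \<noteq> k" hence "p^2*h < k" using a by simp
    hence "(p^2*h)*(p^2*k) < k*(p^2*k)" using pk by (rule mult_less_mono1)
    thus False using 2 e e2 eq by linarith
  qed
  have c2: "p*k = n"
  proof (rule ccontr)
    assume "p*k \<noteq> n" hence "p*k < n" using b by simp
    hence "(p*k)^2 < n^2" by (rule power_strict_mono) simp_all
    thus False using 1 e e2 eq by linarith
  qed
  show "p^2*h = k \<and> p*k = n" using c1 c2 by simp
qed

lemma ar6:
  fixes p h k n d :: nat
  assumes a: "p^2*d \<le> h" and b: "p^2*d \<le> k" and c: "h*k \<le> n*d" and d: "d > 0"
  shows "p^4*d \<le> n" and "p^4*(h*k) \<le> n^2"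
    and "p^4*(h*k) = n^2 \<Longrightarrow> p > 0 \<Longrightarrow> p^4*d = n \<and> h = p^2*d \<and> k = p^2*d \<and> h*k = n*d"
proof -
  have e: "(p^2*d)*(p^2*d) = (p^4*d)*d" by (simp add: power2_eq_square power4_eq_xxxx algebra_simps)
  have 1: "(p^2*d)*(p^2*d) \<le> h*k" using a b by (rule mult_le_mono)
  hence "(p^4*d)*d \<le> n*d" using c e by linarith
  thus f: "p^4*d \<le> n" using d by simp
  have "p^4*(h*k) \<le> p^4*(n*d)" using c by simp
  also have "\<dots> = n*(p^4*d)" by simp
  also have "\<dots> \<le> n*n" using f by simp
  finally show g: "p^4*(h*k) \<le> n^2" by (simp add: power2_eq_square)
  assume eq: "p^4*(h*k) = n^2" and p: "p > 0"
  have "n*n \<le> n*(p^4*d)"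
  proof -
    have "n*n = p^4*(h*k)" using eq by (simp add: power2_eq_square)
    also have "\<dots> \<le> p^4*(n*d)" using c by simp
    finally show ?thesis by simp
  qed
  hence "n \<le> p^4*d" using d p by (cases "n = 0") auto
  hence nd: "p^4*d = n" using f by simp
  have hk: "h*k = n*d"
  proof -
    have "(p^4*d)*d \<le> h*k" using 1 e by simp
    thus ?thesis using c nd by simp
  qed
  have pd: "p^2*d > 0" using p d by simp
  have nd2: "n*d = p^4*d*d" using nd by simp
  have h: "h = p^2*d"
  proof (rule ccontr)
    assume "h \<noteq> p^2*d" hence "p^2*d < h" using a by simp
    moreover have "k > 0" using pd b by linarith
    ultimately have "(p^2*d)*k < h*k" by (intro mult_less_mono1) auto
    moreover have "(p^2*d)*(p^2*d) \<le> (p^2*d)*k" using b by simp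
    ultimately show False using hk nd2 e by linarith
  qed
  have k: "k = p^2*d"
  proof (rule ccontr)
    assume "k \<noteq> p^2*d" hence "p^2*d < k" using b by simp
    moreover have "h > 0" using pd a by linarith
    ultimately have "h*(p^2*d) < h*k" by (intro mult_less_mono2) auto
    moreover have "(p^2*d)*(p^2*d) = h*(p^2*d)" using h by simp
    ultimately show False using hk nd2 e by linarith
  qed
  show "p^4*d = n \<and> h = p^2*d \<and> k = p^2*d \<and> h*k = n*d" using nd h k hk by simp
qed

definition SPp :: "('a,'b) monoid_scheme \<Rightarrow> nat \<Rightarrow> bool" where
  "SPp G p \<longleftrightarrow> (\<forall>K L. subgroup K G \<longrightarrow> subgroup L G \<longrightarrow> grp_center G \<subseteq> K \<longrightarrow> K \<subset> L \<longrightarrow> p * card K \<le> card L)"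

context group begin

abbreviation Cz where "Cz S \<equiv> centralizer G S"

lemma cent_sub: "Cz S \<subseteq> carrier G"
  unfolding centralizer_def by auto

lemma cent_subgroup:
  assumes "S \<subseteq> carrier G" shows "subgroup (Cz S) G"
proof (rule subgroupI)
  show "Cz S \<subseteq> carrier G" by (rule cent_sub)
  have "\<one> \<in> Cz S" using assms unfolding centralizer_def by auto
  thus "Cz S \<noteq> {}" by auto
next
  fix a assume a: "a \<in> Cz S"
  hence ac: "a \<in> carrier G" and ah: "\<forall>h\<in>S. a \<otimes> h = h \<otimes> a" unfolding centralizer_def by auto
  have "inv a \<otimes> h = h \<otimes> inv a" if h: "h \<in> S" for h
  proof -
    have hc: "h \<in> carrier G" using h assms by auto
    have "inv a \<otimes> h = inv a \<otimes> (h \<otimes> a) \<otimes> inv a"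
      using ac hc by (simp add: m_assoc)
    also have "\<dots> = inv a \<otimes> (a \<otimes> h) \<otimes> inv a" using ah h by simp
    also have "\<dots> = h \<otimes> inv a" using ac hc by (simp add: m_assoc[symmetric])
    finally show ?thesis .
  qed
  thus "inv a \<in> Cz S" using ac unfolding centralizer_def by auto
next
  fix a b assume a: "a \<in> Cz S" and b: "b \<in> Cz S"
  hence ac: "a \<in> carrier G" and ah: "\<forall>h\<in>S. a \<otimes> h = h \<otimes> a"
    and bc: "b \<in> carrier G" and bh: "\<forall>h\<in>S. b \<otimes> h = h \<otimes> b" unfolding centralizer_def by auto
  have "a \<otimes> b \<otimes> h = h \<otimes> (a \<otimes> b)" if h: "h \<in> S" for h
  proof -
    have hc: "h \<in> carrier G" using h assms by auto
    have "a \<otimes> b \<otimes> h = a \<otimes> (h \<otimes> b)" using ac bc hc bh h by (simp add: m_assoc)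
    also have "\<dots> = h \<otimes> (a \<otimes> b)" using ac bc hc ah h by (simp add: m_assoc[symmetric])
    finally show ?thesis .
  qed
  thus "a \<otimes> b \<in> Cz S" using ac bc unfolding centralizer_def by auto
qed

lemma cent_anti: "S \<subseteq> T \<Longrightarrow> Cz T \<subseteq> Cz S"
  unfolding centralizer_def by auto

lemma cent_cent: "S \<subseteq> carrier G \<Longrightarrow> S \<subseteq> Cz (Cz S)"
  unfolding centralizer_def by auto

lemma cent3: "S \<subseteq> carrier G \<Longrightarrow> Cz (Cz (Cz S)) = Cz S"
  by (meson cent_anti cent_cent cent_sub subset_antisym)

lemma center_eq: "grp_center G = Cz (carrier G)"
  unfolding grp_center_def centralizer_def by auto

lemma center_sub_cent: "S \<subseteq> carrier G \<Longrightarrow> grp_center G \<subseteq> Cz S"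
  unfolding grp_center_def centralizer_def by auto

lemma cent_iff: "x \<in> Cz S \<longleftrightarrow> x \<in> carrier G \<and> (\<forall>h\<in>S. x \<otimes> h = h \<otimes> x)"
  unfolding centralizer_def by auto

lemma sub_center_eq: "T \<subseteq> carrier G \<Longrightarrow> sub_center G T = T \<inter> Cz T"
  unfolding sub_center_def grp_center_def centralizer_def by auto

lemma card_dvd:
  assumes fin: "finite (carrier G)" and H: "subgroup H G" and K: "subgroup K G" and HK: "H \<subseteq> K"
  shows "card H dvd card K"
proof -
  interpret GK: group "G\<lparr>carrier := K\<rparr>" by (rule subgroup_imp_group[OF K])
  have "subgroup H (G\<lparr>carrier := K\<rparr>)" by (rule subgroup_incl[OF H K HK])
  from GK.lagrange[OF this] have "card (rcosets\<^bsub>G\<lparr>carrier := K\<rparr>\<^esub> H) * card H = card K"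
    unfolding order_def by simp
  thus ?thesis by (metis dvd_triv_right)
qed

definition pset where "pset H K = (\<lambda>(h,k). h \<otimes> k) ` (H \<times> K)"

lemma pset_sub: "H \<subseteq> L \<Longrightarrow> K \<subseteq> L \<Longrightarrow> subgroup L G \<Longrightarrow> pset H K \<subseteq> L"
  unfolding pset_def by (auto intro: subgroup.m_closed)

lemma card_pset:
  assumes fin: "finite (carrier G)" and H: "subgroup H G" and K: "subgroup K G"
  shows "card H * card K \<le> card (pset H K) * card (H \<inter> K)"
proof -
  let ?f = "\<lambda>(h,k). h \<otimes> k"
  let ?P = "pset H K"
  have Hc: "H \<subseteq> carrier G" and Kc: "K \<subseteq> carrier G" using H K subgroup.subset by auto
  have fH: "finite H" and fK: "finite K" using Hc Kc fin finite_subset by auto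
  have fP: "finite ?P" unfolding pset_def using fH fK by auto
  have eq: "H \<times> K = (\<Union>g\<in>?P. {x \<in> H \<times> K. ?f x = g})" unfolding pset_def by auto
  have "card (H \<times> K) = (\<Sum>g\<in>?P. card {x \<in> H \<times> K. ?f x = g})"
    by (subst eq, rule card_UN_disjoint) (use fP fH fK in auto)
  also have "\<dots> \<le> (\<Sum>g\<in>?P. card (H \<inter> K))"
  proof (rule sum_mono)
    fix g assume "g \<in> ?P"
    then obtain h0 k0 where h0: "h0 \<in> H" and k0: "k0 \<in> K" and g: "g = h0 \<otimes> k0" unfolding pset_def by auto
    have h0c: "h0 \<in> carrier G" and k0c: "k0 \<in> carrier G" using h0 k0 Hc Kc by auto
    let ?u = "\<lambda>(h,k). inv h0 \<otimes> h"
    have inj: "inj_on ?u {x \<in> H \<times> K. ?f x = g}"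
    proof (rule inj_onI)
      fix x y assume xs: "x \<in> {x \<in> H \<times> K. ?f x = g}" and ys: "y \<in> {x \<in> H \<times> K. ?f x = g}"
        and e: "?u x = ?u y"
      obtain h k where xe: "x = (h,k)" by (cases x)
      obtain h' k' where ye: "y = (h',k')" by (cases y)
      have a: "h \<in> H" "k \<in> K" "h \<otimes> k = g" "h' \<in> H" "k' \<in> K" "h' \<otimes> k' = g"
        using xs ys xe ye by auto
      have e2: "inv h0 \<otimes> h = inv h0 \<otimes> h'" using e xe ye by simp
      have hh: "h = h'" using e2 a Hc h0c by (meson inv_closed l_cancel subsetD)
      then have "k = k'" using a Hc Kc by (metis l_cancel subsetD)
      then show "x = y" using hh xe ye by simp
    qed
    have img: "?u ` {x \<in> H \<times> K. ?f x = g} \<subseteq> H \<inter> K"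
    proof
      fix x assume "x \<in> ?u ` {x \<in> H \<times> K. ?f x = g}"
      then obtain h k where a: "h \<in> H" "k \<in> K" "h \<otimes> k = g" and x: "x = inv h0 \<otimes> h" by auto
      have hc: "h \<in> carrier G" and kc: "k \<in> carrier G" using a Hc Kc by auto
      have x1: "inv h0 \<otimes> h \<in> H" using a h0 H by (simp add: subgroup.m_closed subgroup.m_inv_closed)
      have "h0 \<otimes> k0 = h \<otimes> k" using a g by simp
      hence "inv h0 \<otimes> h = k0 \<otimes> inv k"
        using hc kc h0c k0c
        by (metis inv_solve_left inv_solve_right m_assoc inv_closed m_closed)
      hence "inv h0 \<otimes> h \<in> K" using k0 a K by (simp add: subgroup.m_closed subgroup.m_inv_closed)
      thus "x \<in> H \<inter> K" using x1 x by simp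
    qed
    show "card {x \<in> H \<times> K. ?f x = g} \<le> card (H \<inter> K)"
      using card_inj_on_le[OF inj img] fH by auto
  qed
  also have "\<dots> = card ?P * card (H \<inter> K)" by simp
  finally show ?thesis by (simp add: card_cartesian_product)
qed


lemma sub_finite: "finite (carrier G) \<Longrightarrow> subgroup H G \<Longrightarrow> finite H"
  using subgroup.subset finite_subset by blast

lemma sub_card_pos: "finite (carrier G) \<Longrightarrow> subgroup H G \<Longrightarrow> card H > 0"
  using sub_finite subgroup.one_closed card_gt_0_iff by blast

lemma cent_card_pos: "finite (carrier G) \<Longrightarrow> S \<subseteq> carrier G \<Longrightarrow> card (Cz S) > 0"
  using sub_card_pos cent_subgroup by blast

lemma center_subgroup: "subgroup (grp_center G) G"
  using center_eq cent_subgroup by simp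

lemma NC:
  assumes fin: "finite (carrier G)" and SP: "SPp G p" and W: "subgroup W G"
    and ZW: "grp_center G \<subseteq> W" and ne: "W \<inter> Cz W \<noteq> W"
  shows "p^2 * card (W \<inter> Cz W) \<le> card W"
proof -
  let ?D = "W \<inter> Cz W"
  have Wc: "W \<subseteq> carrier G" using W subgroup.subset by blast
  have D: "subgroup ?D G" using subgroups_Inter_pair W cent_subgroup Wc by blast
  have ZD: "grp_center G \<subseteq> ?D" using ZW center_sub_cent Wc by blast
  obtain k where kW: "k \<in> W" and kD: "k \<notin> ?D" using ne by blast
  have kc: "k \<in> carrier G" using kW Wc by blast
  let ?M = "W \<inter> Cz {k}"
  have M: "subgroup ?M G" using subgroups_Inter_pair W cent_subgroup kc by blast
  have DM: "?D \<subset> ?M"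
  proof
    show "?D \<subseteq> ?M" using kW unfolding centralizer_def by auto
    have "k \<in> ?M" using kW kc unfolding centralizer_def by auto
    thus "?D \<noteq> ?M" using kD by blast
  qed
  have MW: "?M \<subset> W"
  proof
    show "?M \<subseteq> W" by blast
    show "?M \<noteq> W"
    proof
      assume "?M = W"
      hence "\<forall>x\<in>W. x \<otimes> k = k \<otimes> x" unfolding centralizer_def by auto
      hence "k \<in> Cz W" using kc unfolding centralizer_def by auto
      thus False using kD kW by blast
    qed
  qed
  have ZM: "grp_center G \<subseteq> ?M" using ZD DM by blast
  have 1: "p * card ?D \<le> card ?M" using SP D M ZD DM unfolding SPp_def by blast
  have 2: "p * card ?M \<le> card W" using SP M W ZM MW unfolding SPp_def by blast
  have "p * (p * card ?D) \<le> p * card ?M" using 1 by simp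
  from this 2 have "p * (p * card ?D) \<le> card W" by (rule le_trans)
  thus ?thesis by (simp add: power2_eq_square mult.assoc)
qed

lemma AB:
  assumes fin: "finite (carrier G)" and SP: "SPp G p" and p2: "p \<ge> 2" and B: "subgroup B G"
    and YB: "Y \<subseteq> B" and YC: "Y \<subseteq> Cz B" and ZY: "grp_center G \<subseteq> Y"
    and cB: "card B = p * card Y"
  shows "B \<subseteq> Cz B"
proof (rule ccontr)
  assume "\<not> B \<subseteq> Cz B"
  hence ne: "B \<inter> Cz B \<noteq> B" by blast
  have Bc: "B \<subseteq> carrier G" using B subgroup.subset by blast
  have D: "subgroup (B \<inter> Cz B) G" using subgroups_Inter_pair B cent_subgroup Bc by blast
  have 1: "p^2 * card (B \<inter> Cz B) \<le> card B" using NC[OF fin SP B _ ne] ZY YB by blast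
  have 2: "card Y \<le> card (B \<inter> Cz B)" using card_mono sub_finite[OF fin D] YB YC by blast
  have pos: "card Y > 0" using 2 cB sub_card_pos[OF fin B] by simp
  have "p^2 * card Y \<le> p * card Y" using 1 2 cB
    by (metis (no_types, opaque_lifting) le_trans mult_le_mono2)
  hence "p^2 \<le> p" using pos by simp
  thus False using p2 by (simp add: power2_eq_square)
qed

lemma reduce:
  assumes fin: "finite (carrier G)" and H: "subgroup H G"
  shows "cd_measure G H \<le> cd_measure G (Cz (Cz H))"
    and "cd_measure G H = cd_measure G (Cz (Cz H)) \<Longrightarrow> Cz (Cz H) = H"
proof -
  have Hc: "H \<subseteq> carrier G" using H subgroup.subset by blast
  have sub: "H \<subseteq> Cz (Cz H)" using cent_cent Hc by blast
  have fC: "finite (Cz (Cz H))" using fin cent_sub finite_subset by blast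
  have c3: "Cz (Cz (Cz H)) = Cz H" using cent3 Hc by blast
  have pos: "card (Cz H) > 0" using cent_card_pos fin Hc by blast
  have le: "card H \<le> card (Cz (Cz H))" using card_mono fC sub by blast
  show "cd_measure G H \<le> cd_measure G (Cz (Cz H))"
    unfolding cd_measure_def c3 using le by simp
  assume "cd_measure G H = cd_measure G (Cz (Cz H))"
  hence "card H = card (Cz (Cz H))" unfolding cd_measure_def c3 using pos by simp
  thus "Cz (Cz H) = H" using card_subset_eq[OF fC sub] by simp
qed

lemma finite_subgroups: "finite (carrier G) \<Longrightarrow> finite {H. subgroup H G}"
proof -
  assume fin: "finite (carrier G)"
  have "{H. subgroup H G} \<subseteq> Pow (carrier G)" using subgroup.subset by blast
  thus ?thesis using fin finite_subset by blast
qed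

lemma cd_max_ge:
  assumes fin: "finite (carrier G)" and H: "subgroup H G"
  shows "cd_measure G H \<le> cd_max G"
proof -
  have "{cd_measure G H | H. subgroup H G} = cd_measure G ` {H. subgroup H G}" by auto
  hence f: "finite {cd_measure G H | H. subgroup H G}" using finite_subgroups[OF fin] by simp
  show ?thesis unfolding cd_max_def by (rule Max_ge[OF f]) (use H in blast)
qed

lemma cd_max_eq:
  assumes fin: "finite (carrier G)" and bnd: "\<And>H. subgroup H G \<Longrightarrow> cd_measure G H \<le> M"
    and H0: "subgroup H0 G" and e: "cd_measure G H0 = M"
  shows "cd_max G = M"
proof -
  have "{cd_measure G H | H. subgroup H G} = cd_measure G ` {H. subgroup H G}" by auto
  hence f: "finite {cd_measure G H | H. subgroup H G}" using finite_subgroups[OF fin] by simp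
  have ne: "{cd_measure G H | H. subgroup H G} \<noteq> {}" using H0 by blast
  have "cd_max G \<le> M" unfolding cd_max_def using Max_le_iff[OF f ne] bnd by blast
  moreover have "M \<le> cd_max G" using cd_max_ge[OF fin H0] e by simp
  ultimately show ?thesis by simp
qed

lemma CD_iff: "H \<in> CD G \<longleftrightarrow> subgroup H G \<and> cd_measure G H = cd_max G"
  unfolding CD_def by simp

lemma CD_closed:
  assumes fin: "finite (carrier G)" and H: "H \<in> CD G"
  shows "Cz (Cz H) = H"
proof -
  have Hs: "subgroup H G" and e: "cd_measure G H = cd_max G" using H CD_iff by auto
  have Hc: "H \<subseteq> carrier G" using Hs subgroup.subset by blast
  have s: "subgroup (Cz (Cz H)) G" using cent_subgroup cent_sub by blast
  have "cd_measure G (Cz (Cz H)) \<le> cd_max G" using cd_max_ge[OF fin s] .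
  with reduce[OF fin Hs] e show ?thesis by simp
qed

lemma CD_cent:
  assumes fin: "finite (carrier G)" and H: "H \<in> CD G"
  shows "Cz H \<in> CD G"
proof -
  have Hs: "subgroup H G" and e: "cd_measure G H = cd_max G" using H CD_iff by auto
  have Hc: "H \<subseteq> carrier G" using Hs subgroup.subset by blast
  have "cd_measure G (Cz H) = cd_measure G H"
    unfolding cd_measure_def using CD_closed[OF fin H] by simp
  thus ?thesis using e cent_subgroup[OF Hc] CD_iff by simp
qed

lemma cd_max_pos:
  assumes fin: "finite (carrier G)" shows "cd_max G > 0"
proof -
  have s: "subgroup (carrier G) G" by (rule subgroup_self)
  have "cd_measure G (carrier G) > 0" unfolding cd_measure_def
    using sub_card_pos[OF fin s] cent_card_pos[OF fin] by simp
  thus ?thesis using cd_max_ge[OF fin s] by simp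
qed

lemma CD_inter:
  assumes fin: "finite (carrier G)" and H: "H \<in> CD G" and K: "K \<in> CD G"
  shows "H \<inter> K \<in> CD G"
proof -
  let ?M = "cd_max G"
  have Hs: "subgroup H G" and eH: "card H * card (Cz H) = ?M" using H CD_iff unfolding cd_measure_def by auto
  have Ks: "subgroup K G" and eK: "card K * card (Cz K) = ?M" using K CD_iff unfolding cd_measure_def by auto
  have Hc: "H \<subseteq> carrier G" using Hs subgroup.subset by blast
  have Kc: "K \<subseteq> carrier G" using Ks subgroup.subset by blast
  let ?L = "Cz (Cz (H \<union> K))"
  have Ls: "subgroup ?L G" using cent_subgroup cent_sub by blast
  have CL: "Cz ?L = Cz H \<inter> Cz K" using cent3[of "H \<union> K"] Hc Kc unfolding centralizer_def by auto
  have HKs: "subgroup (H \<inter> K) G" using subgroups_Inter_pair Hs Ks by blast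
  have CHs: "subgroup (Cz H) G" and CKs: "subgroup (Cz K) G" using cent_subgroup Hc Kc by auto
  have p1: "card H * card K \<le> card (pset H K) * card (H \<inter> K)" using card_pset[OF fin Hs Ks] .
  have p2: "card (Cz H) * card (Cz K) \<le> card (pset (Cz H) (Cz K)) * card (Cz H \<inter> Cz K)"
    using card_pset[OF fin CHs CKs] .
  have s1: "pset H K \<subseteq> ?L" using pset_sub[OF _ _ Ls] cent_cent[of "H \<union> K"] Hc Kc by blast
  have s2: "pset (Cz H) (Cz K) \<subseteq> Cz (H \<inter> K)"
    using pset_sub[OF _ _ cent_subgroup[of "H \<inter> K"]] cent_anti[of "H \<inter> K"] Hc by blast
  have fL: "finite ?L" using sub_finite[OF fin Ls] .
  have fC: "finite (Cz (H \<inter> K))" using fin cent_sub finite_subset by blast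
  have c1: "card (pset H K) \<le> card ?L" using card_mono[OF fL s1] .
  have c2: "card (pset (Cz H) (Cz K)) \<le> card (Cz (H \<inter> K))" using card_mono[OF fC s2] .
  have "?M * ?M = (card H * card K) * (card (Cz H) * card (Cz K))" using eH eK by (simp add: algebra_simps)
  also have "\<dots> \<le> (card (pset H K) * card (H \<inter> K)) * (card (pset (Cz H) (Cz K)) * card (Cz H \<inter> Cz K))"
    using p1 p2 mult_le_mono by blast
  also have "\<dots> = (card (pset H K) * card (Cz H \<inter> Cz K)) * (card (H \<inter> K) * card (pset (Cz H) (Cz K)))"
    by (simp add: algebra_simps)
  also have "\<dots> \<le> (card ?L * card (Cz ?L)) * (card (H \<inter> K) * card (Cz (H \<inter> K)))"
    using c1 c2 CL by (intro mult_le_mono) auto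
  finally have ineq: "?M * ?M \<le> cd_measure G ?L * cd_measure G (H \<inter> K)" unfolding cd_measure_def .
  have a: "cd_measure G ?L \<le> ?M" using cd_max_ge[OF fin Ls] .
  have b: "cd_measure G (H \<inter> K) \<le> ?M" using cd_max_ge[OF fin HKs] .
  have "cd_measure G (H \<inter> K) = ?M"
  proof (rule ccontr)
    assume "cd_measure G (H \<inter> K) \<noteq> ?M"
    hence b': "cd_measure G (H \<inter> K) < ?M" using b by simp
    have "cd_measure G ?L * cd_measure G (H \<inter> K) \<le> ?M * cd_measure G (H \<inter> K)"
      by (rule mult_le_mono1[OF a])
    also have "\<dots> < ?M * ?M" by (rule mult_less_mono2[OF b' cd_max_pos[OF fin]])
    finally have "cd_measure G ?L * cd_measure G (H \<inter> K) < ?M * ?M" .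
    thus False using ineq by simp
  qed
  thus ?thesis using HKs CD_iff by simp
qed


lemma comm_sub:
  assumes B: "subgroup B G" and ab: "B \<subseteq> Cz B"
  shows "comm_group (G\<lparr>carrier := B\<rparr>)"
proof -
  interpret GB: group "G\<lparr>carrier := B\<rparr>" by (rule subgroup_imp_group[OF B])
  show ?thesis
    by (rule GB.group_comm_groupI) (use ab in \<open>auto simp: centralizer_def\<close>)
qed

lemma SP_pow:
  assumes fin: "finite (carrier G)" and pr: "Factorial_Ring.prime p" and n: "card (carrier G) = p^i * card (grp_center G)"
  shows "SPp G p"
  unfolding SPp_def
proof (intro allI impI)
  fix K L assume K: "subgroup K G" and L: "subgroup L G" and ZK: "grp_center G \<subseteq> K" and KL: "K \<subset> L"
  obtain t where t: "card L = card K * t" using card_dvd[OF fin K L] KL by (auto elim: dvdE)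
  obtain s where s: "card (carrier G) = card L * s" using card_dvd[OF fin L subgroup_self] subgroup.subset[OF L] by (auto elim: dvdE)
  obtain r where r: "card K = card (grp_center G) * r" using card_dvd[OF fin center_subgroup K ZK] by (auto elim: dvdE)
  have zpos: "card (grp_center G) > 0" using sub_card_pos[OF fin center_subgroup] .
  have e: "card (carrier G) = (r * t * s) * card (grp_center G)" using s t r by (simp add: algebra_simps)
  have "p^i * card (grp_center G) = (r * t * s) * card (grp_center G)" using trans[OF sym[OF n] e] .
  hence "r * t * s = p^i" using zpos by simp
  hence "p^i = r * t * s" by simp
  hence "t dvd p^i" by (metis dvd_triv_left dvd_mult_left mult.commute)
  then obtain j where tj: "t = p^j" using divides_primepow_nat[OF pr] by blast
  have lt: "card K < card L" using psubset_card_mono[OF sub_finite[OF fin L] KL] .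
  have "t \<noteq> 1" using lt t by auto
  hence "j \<noteq> 0" using tj by auto
  hence "p \<le> t" using tj pr prime_gt_0_nat
    by (metis One_nat_def Suc_leI not_gr0 power_increasing power_one_right)
  thus "p * card K \<le> card L" using t by (simp add: mult.commute)
qed

lemma SP_small:
  assumes fin: "finite (carrier G)" and sp: "smallest_prime_divisor p (card (carrier G))"
  shows "SPp G p"
  unfolding SPp_def
proof (intro allI impI)
  fix K L assume K: "subgroup K G" and L: "subgroup L G" and ZK: "grp_center G \<subseteq> K" and KL: "K \<subset> L"
  obtain t where t: "card L = card K * t" using card_dvd[OF fin K L] KL by (auto elim: dvdE)
  have "card L dvd card (carrier G)" using card_dvd[OF fin L subgroup_self] subgroup.subset[OF L] by blast
  hence tn: "t dvd card (carrier G)" using t by (metis dvd_mult_right)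
  have lt: "card K < card L" using psubset_card_mono[OF sub_finite[OF fin L] KL] .
  have "t \<noteq> 1" using lt t by auto
  then obtain q where q: "Factorial_Ring.prime q" "q dvd t" using prime_factor_nat by blast
  have "p \<le> q" using sp q tn dvd_trans unfolding smallest_prime_divisor_def by blast
  moreover have "t > 0" using t lt by (metis gr0I less_nat_zero_code mult_0_right)
  hence "q \<le> t" using q dvd_imp_le by blast
  ultimately have "p \<le> t" by simp
  thus "p * card K \<le> card L" using t by (simp add: mult.commute)
qed

lemma CNT:
  assumes fin: "finite (carrier G)" and SP: "SPp G p" and p2: "p \<ge> 2" and W: "subgroup W G"
    and Yd: "Y = W \<inter> Cz W" and cW: "card W = p^2 * card Y" and ZY: "grp_center G \<subseteq> Y"
  defines "F \<equiv> {B. subgroup B G \<and> Y \<subseteq> B \<and> B \<subseteq> W \<and> card B = p * card Y}"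
  shows "finite F" and "card F = p + 1"
proof -
  have Wc: "W \<subseteq> carrier G" using W subgroup.subset by blast
  have Ys: "subgroup Y G" using Yd subgroups_Inter_pair W cent_subgroup Wc by blast
  have ypos: "card Y > 0" using sub_card_pos[OF fin Ys] .
  have YW: "Y \<subseteq> W" using Yd by blast
  have FP: "F \<subseteq> Pow (carrier G)" unfolding F_def using subgroup.subset by blast
  show fF: "finite F" using finite_subset[OF FP] fin by blast
  have cover: "\<exists>B\<in>F. x \<in> B" if x: "x \<in> W - Y" for x
  proof -
    have xc: "x \<in> carrier G" using x Wc by blast
    let ?B = "W \<inter> Cz {x}"
    have Bs: "subgroup ?B G" using subgroups_Inter_pair W cent_subgroup xc by blast
    have xB: "x \<in> ?B" using x xc unfolding centralizer_def by auto
    have YB: "Y \<subseteq> ?B" using Yd x unfolding centralizer_def by auto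
    have YB': "Y \<subset> ?B" using YB xB x by blast
    have BW: "?B \<subset> W"
    proof
      show "?B \<subseteq> W" by blast
      show "?B \<noteq> W"
      proof
        assume "?B = W"
        hence "\<forall>w\<in>W. w \<otimes> x = x \<otimes> w" unfolding centralizer_def by auto
        hence "x \<in> Cz W" using xc unfolding centralizer_def by auto
        thus False using x Yd by blast
      qed
    qed
    have 1: "p * card Y \<le> card ?B" using SP Ys Bs ZY YB' unfolding SPp_def by blast
    have 2: "p * card ?B \<le> card W" using SP Bs W ZY YB BW unfolding SPp_def by blast
    have "p * card ?B \<le> p * (p * card Y)" using 2 cW by (simp add: power2_eq_square mult.assoc)
    hence "card ?B \<le> p * card Y" using p2 by simp
    hence "card ?B = p * card Y" using 1 by simp
    hence "?B \<in> F" unfolding F_def using Bs YB by blast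
    thus ?thesis using xB by blast
  qed
  have disj: "B \<inter> B' = Y" if B: "B \<in> F" and B': "B' \<in> F" and ne: "B \<noteq> B'" for B B'
  proof (rule ccontr)
    assume a: "B \<inter> B' \<noteq> Y"
    have Bs: "subgroup B G" and B's: "subgroup B' G" and cB: "card B = p * card Y" and cB': "card B' = p * card Y"
      and YB: "Y \<subseteq> B" and YB': "Y \<subseteq> B'" using B B' unfolding F_def by auto
    have Is: "subgroup (B \<inter> B') G" using subgroups_Inter_pair Bs B's by blast
    have "Y \<subset> B \<inter> B'" using a YB YB' by blast
    hence c: "p * card Y \<le> card (B \<inter> B')" using SP Ys Is ZY unfolding SPp_def by blast
    have e1: "B \<inter> B' = B" using card_subset_eq[OF sub_finite[OF fin Bs], of "B \<inter> B'"] c cB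
      card_mono[OF sub_finite[OF fin Bs], of "B \<inter> B'"] by auto
    have e2: "B \<inter> B' = B'" using card_subset_eq[OF sub_finite[OF fin B's], of "B \<inter> B'"] c cB'
      card_mono[OF sub_finite[OF fin B's], of "B \<inter> B'"] by auto
    show False using e1 e2 ne by simp
  qed
  have U: "W - Y = (\<Union>B\<in>F. B - Y)" using cover unfolding F_def by blast
  have "card (W - Y) = card (\<Union>B\<in>F. B - Y)" using U by simp
  also have "\<dots> = (\<Sum>B\<in>F. card (B - Y))"
  proof (rule card_UN_disjoint[OF fF])
    show "\<forall>B\<in>F. finite (B - Y)" unfolding F_def using sub_finite[OF fin] by blast
    show "\<forall>B\<in>F. \<forall>B'\<in>F. B \<noteq> B' \<longrightarrow> (B - Y) \<inter> (B' - Y) = {}" using disj by blast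
  qed
  also have "\<dots> = (\<Sum>B\<in>F. p * card Y - card Y)"
  proof (rule sum.cong[OF refl])
    fix B assume "B \<in> F"
    hence "subgroup B G" "Y \<subseteq> B" "card B = p * card Y" unfolding F_def by auto
    thus "card (B - Y) = p * card Y - card Y" using card_Diff_subset[OF sub_finite[OF fin Ys], of B] by simp
  qed
  finally have e: "p^2 * card Y - card Y = card F * (p * card Y - card Y)"
    using card_Diff_subset[OF sub_finite[OF fin Ys] YW] cW by simp
  have f1: "p^2 * card Y - card Y = (p + 1) * ((p - 1) * card Y)"
    using p2 by (cases p) (auto simp: algebra_simps power2_eq_square)
  have f2: "p * card Y - card Y = (p - 1) * card Y" by (simp add: diff_mult_distrib)
  have pos: "(p - 1) * card Y > 0" using p2 ypos by simp
  have "(p + 1) * ((p - 1) * card Y) = card F * ((p - 1) * card Y)" using e f1 f2 by simp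
  thus "card F = p + 1" using pos by (metis mult_right_cancel neq0_conv)
qed

end

context group begin

lemma closed_cases:
  assumes fin: "finite (carrier G)" and SP: "SPp G p" and H: "subgroup H G" and cl: "Cz (Cz H) = H"
  shows "Cz H = H \<or>
   (H \<subset> Cz H \<and> Cz H = carrier G \<and> H = grp_center G) \<or>
   (H \<subset> Cz H \<and> Cz H \<noteq> carrier G \<and> p * card (Cz H) \<le> card (carrier G) \<and> p^2 * card H \<le> card (Cz H)) \<or>
   (Cz H \<subset> H \<and> H = carrier G) \<or>
   (Cz H \<subset> H \<and> H \<noteq> carrier G \<and> p * card H \<le> card (carrier G) \<and> p^2 * card (Cz H) \<le> card H) \<or>
   (p^2 * card (H \<inter> Cz H) \<le> card H \<and> p^2 * card (H \<inter> Cz H) \<le> card (Cz H) \<and>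
    card H * card (Cz H) \<le> card (carrier G) * card (H \<inter> Cz H) \<and> grp_center G \<subseteq> H \<inter> Cz H \<and>
    (card H * card (Cz H) = card (carrier G) * card (H \<inter> Cz H) \<longrightarrow> H \<inter> Cz H \<subseteq> grp_center G))"
proof -
  let ?K = "Cz H"
  let ?n = "card (carrier G)"
  have Hc: "H \<subseteq> carrier G" using H subgroup.subset by blast
  have Ks: "subgroup ?K G" using cent_subgroup Hc by blast
  have Kc: "?K \<subseteq> carrier G" using cent_sub by blast
  have ZK: "grp_center G \<subseteq> ?K" using center_sub_cent Hc by blast
  have ZH: "grp_center G \<subseteq> H" using center_sub_cent[OF Kc] cl by simp
  have CK: "Cz ?K = H" using cl .
  have Gs: "subgroup (carrier G) G" by (rule subgroup_self)
  show ?thesis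
  proof (cases "H \<subseteq> ?K")
    case True
    show ?thesis
    proof (cases "H = ?K")
      case True thus ?thesis by (intro disjI1) (rule sym)
    next
      case False
      hence HK: "H \<subset> ?K" using \<open>H \<subseteq> ?K\<close> by blast
      show ?thesis
      proof (cases "?K = carrier G")
        case True
        hence "H = grp_center G" using CK center_eq by simp
        hence XX: "H \<subset> Cz H \<and> Cz H = carrier G \<and> H = grp_center G" using HK True by simp
        show ?thesis by (rule disjI2[OF disjI1[OF XX]])
      next
        case False
        have 1: "p * card ?K \<le> ?n" using SP Ks Gs ZK False Kc unfolding SPp_def by blast
        have e: "?K \<inter> Cz ?K = H" using CK \<open>H \<subseteq> ?K\<close> by blast
        have ne: "?K \<inter> Cz ?K \<noteq> ?K" using e HK by blast
        have "p^2 * card (?K \<inter> Cz ?K) \<le> card ?K" by (rule NC[OF fin SP Ks ZK ne])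
        hence 2: "p^2 * card H \<le> card ?K" using e by simp
        have XX: "H \<subset> Cz H \<and> Cz H \<noteq> carrier G \<and> p * card (Cz H) \<le> card (carrier G) \<and> p^2 * card H \<le> card (Cz H)"
          using HK False 1 2 by simp
        show ?thesis by (rule disjI2[OF disjI2[OF disjI1[OF XX]]])
      qed
    qed
  next
    case nHK: False
    show ?thesis
    proof (cases "?K \<subseteq> H")
      case True
      have KH: "?K \<subset> H" using True nHK by blast
      show ?thesis
      proof (cases "H = carrier G")
        case True
        hence XX: "Cz H \<subset> H \<and> H = carrier G" using KH by simp
        show ?thesis by (rule disjI2[OF disjI2[OF disjI2[OF disjI1[OF XX]]]])
      next
        case False
        have 1: "p * card H \<le> ?n" using SP H Gs ZH False Hc unfolding SPp_def by blast
        have e: "H \<inter> Cz H = ?K" using True by blast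
        have ne: "H \<inter> Cz H \<noteq> H" using e KH by blast
        have "p^2 * card (H \<inter> Cz H) \<le> card H" by (rule NC[OF fin SP H ZH ne])
        hence 2: "p^2 * card ?K \<le> card H" using e by simp
        have XX: "Cz H \<subset> H \<and> H \<noteq> carrier G \<and> p * card H \<le> card (carrier G) \<and> p^2 * card (Cz H) \<le> card H"
          using KH False 1 2 by simp
        show ?thesis by (rule disjI2[OF disjI2[OF disjI2[OF disjI2[OF disjI1[OF XX]]]]])
      qed
    next
      case nKH: False
      let ?D = "H \<inter> ?K"
      have neH: "H \<inter> Cz H \<noteq> H" using nHK by blast
      have d1: "p^2 * card ?D \<le> card H" by (rule NC[OF fin SP H ZH neH])
      have eK: "?K \<inter> Cz ?K = ?D" using CK by blast
      have neK: "?K \<inter> Cz ?K \<noteq> ?K" using eK nKH by blast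
      have "p^2 * card (?K \<inter> Cz ?K) \<le> card ?K" by (rule NC[OF fin SP Ks ZK neK])
      hence d2: "p^2 * card ?D \<le> card ?K" using eK by simp
      have pr: "card H * card ?K \<le> card (pset H ?K) * card ?D" using card_pset[OF fin H Ks] .
      have psub: "pset H ?K \<subseteq> carrier G" using pset_sub[OF Hc Kc Gs] .
      have pc: "card (pset H ?K) \<le> ?n" using card_mono[OF fin psub] .
      have Dpos: "card ?D > 0" using sub_card_pos[OF fin subgroups_Inter_pair[OF H Ks]] .
      have d3: "card H * card ?K \<le> ?n * card ?D" using pr pc by (meson le_trans mult_le_mono1)
      have d4: "?D \<subseteq> grp_center G" if eq: "card H * card ?K = ?n * card ?D"
      proof -
        have "?n * card ?D \<le> card (pset H ?K) * card ?D" using pr eq by simp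
        hence "?n \<le> card (pset H ?K)" using Dpos by simp
        hence "card (pset H ?K) = ?n" using pc by (rule antisym[rotated])
        hence pe: "pset H ?K = carrier G" by (rule card_subset_eq[OF fin psub])
        show ?thesis
        proof
          fix d assume d: "d \<in> ?D"
          have dc: "d \<in> carrier G" using d Hc by blast
          have "d \<otimes> g = g \<otimes> d" if g: "g \<in> carrier G" for g
          proof -
            have "g \<in> pset H ?K" using g pe by simp
            then obtain h k where h: "h \<in> H" and k: "k \<in> ?K" and ge: "g = h \<otimes> k"
              unfolding pset_def by auto
            have hc: "h \<in> carrier G" using h Hc by blast
            have kc: "k \<in> carrier G" using k Kc by blast
            have dh: "d \<otimes> h = h \<otimes> d" using d h unfolding centralizer_def by auto
            have dk: "d \<otimes> k = k \<otimes> d"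
            proof -
              have "d \<in> Cz ?K" using d CK by blast
              thus ?thesis using k unfolding centralizer_def by auto
            qed
            have "d \<otimes> (h \<otimes> k) = h \<otimes> d \<otimes> k" using dh dc hc kc by (simp add: m_assoc[symmetric])
            also have "\<dots> = h \<otimes> k \<otimes> d" using dk dc hc kc by (simp add: m_assoc)
            finally show ?thesis using ge by simp
          qed
          thus "d \<in> grp_center G" using dc unfolding grp_center_def by auto
        qed
      qed
      have ZD: "grp_center G \<subseteq> ?D" using ZH ZK by blast
      have XX: "p^2 * card (H \<inter> Cz H) \<le> card H \<and> p^2 * card (H \<inter> Cz H) \<le> card (Cz H) \<and>
    card H * card (Cz H) \<le> card (carrier G) * card (H \<inter> Cz H) \<and> grp_center G \<subseteq> H \<inter> Cz H \<and>
    (card H * card (Cz H) = card (carrier G) * card (H \<inter> Cz H) \<longrightarrow> H \<inter> Cz H \<subseteq> grp_center G)"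
        using d1 d2 d3 d4 ZD by simp
      show ?thesis by (rule disjI2[OF disjI2[OF disjI2[OF disjI2[OF disjI2[OF XX]]]]])
    qed
  qed
qed


lemma CB:
  assumes fin: "finite (carrier G)" and SP: "SPp G p" and p: "p > 0" and H: "subgroup H G" and cl: "Cz (Cz H) = H"
  shows "Cz H = H \<or> (H = grp_center G \<and> Cz H = carrier G) \<or> (H = carrier G \<and> Cz H = grp_center G) \<or>
   (p^4 * cd_measure G H \<le> (card (carrier G))^2 \<and> (p^4 * cd_measure G H = (card (carrier G))^2 \<longrightarrow>
    (H \<subset> Cz H \<and> p * card (Cz H) = card (carrier G) \<and> p^2 * card H = card (Cz H)) \<or>
    (Cz H \<subset> H \<and> p * card H = card (carrier G) \<and> p^2 * card (Cz H) = card H) \<or>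
    (p^2 * card H = card (carrier G) \<and> p^2 * card (Cz H) = card (carrier G) \<and> H \<inter> Cz H \<subseteq> grp_center G \<and> p^4 * card (H \<inter> Cz H) = card (carrier G))))"
proof -
  let ?n = "card (carrier G)"
  have m: "cd_measure G H = card H * card (Cz H)" unfolding cd_measure_def ..
  have Hc: "H \<subseteq> carrier G" using H subgroup.subset by blast
  have Kpos: "card (Cz H) > 0" using cent_card_pos[OF fin Hc] .
  have Hpos: "card H > 0" using sub_card_pos[OF fin H] .
  have Dpos: "card (H \<inter> Cz H) > 0" using sub_card_pos[OF fin subgroups_Inter_pair[OF H cent_subgroup[OF Hc]]] .
  from closed_cases[OF fin SP H cl] show ?thesis
  proof (elim disjE)
    assume "Cz H = H" thus ?thesis by (rule disjI1)
  next
    assume "H \<subset> Cz H \<and> Cz H = carrier G \<and> H = grp_center G" thus ?thesis by blast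
  next
    assume a: "H \<subset> Cz H \<and> Cz H \<noteq> carrier G \<and> p * card (Cz H) \<le> ?n \<and> p^2 * card H \<le> card (Cz H)"
    hence a1: "p^2 * card H \<le> card (Cz H)" and a2: "p * card (Cz H) \<le> ?n" by auto
    have X: "p^4 * cd_measure G H \<le> ?n^2 \<and> (p^4 * cd_measure G H = ?n^2 \<longrightarrow>
      (H \<subset> Cz H \<and> p * card (Cz H) = ?n \<and> p^2 * card H = card (Cz H)))"
      using ar3[OF a1 a2] a Kpos p m by auto
    thus ?thesis by blast
  next
    assume "Cz H \<subset> H \<and> H = carrier G"
    hence "H = carrier G \<and> Cz H = grp_center G" using center_eq by auto
    thus ?thesis by blast
  next
    assume a: "Cz H \<subset> H \<and> H \<noteq> carrier G \<and> p * card H \<le> ?n \<and> p^2 * card (Cz H) \<le> card H"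
    hence a1: "p^2 * card (Cz H) \<le> card H" and a2: "p * card H \<le> ?n" by auto
    have e: "card H * card (Cz H) = card (Cz H) * card H" by simp
    have X: "p^4 * cd_measure G H \<le> ?n^2 \<and> (p^4 * cd_measure G H = ?n^2 \<longrightarrow>
      (Cz H \<subset> H \<and> p * card H = ?n \<and> p^2 * card (Cz H) = card H))"
      using ar3[OF a1 a2] a Hpos p m e by auto
    thus ?thesis by blast
  next
    assume a: "p^2 * card (H \<inter> Cz H) \<le> card H \<and> p^2 * card (H \<inter> Cz H) \<le> card (Cz H) \<and>
    card H * card (Cz H) \<le> ?n * card (H \<inter> Cz H) \<and> grp_center G \<subseteq> H \<inter> Cz H \<and>
    (card H * card (Cz H) = ?n * card (H \<inter> Cz H) \<longrightarrow> H \<inter> Cz H \<subseteq> grp_center G)"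
    hence a1: "p^2 * card (H \<inter> Cz H) \<le> card H" and a2: "p^2 * card (H \<inter> Cz H) \<le> card (Cz H)"
      and a3: "card H * card (Cz H) \<le> ?n * card (H \<inter> Cz H)" by auto
    note r = ar6[OF a1 a2 a3 Dpos]
    have "p^4 * cd_measure G H \<le> ?n^2" using r(2) m by simp
    moreover have "p^2 * card H = ?n \<and> p^2 * card (Cz H) = ?n \<and> H \<inter> Cz H \<subseteq> grp_center G \<and> p^4 * card (H \<inter> Cz H) = ?n"
      if eq: "p^4 * cd_measure G H = ?n^2"
    proof -
      have "p ^ 4 * card (H \<inter> Cz H) = ?n \<and> card H = p\<^sup>2 * card (H \<inter> Cz H) \<and>
         card (Cz H) = p\<^sup>2 * card (H \<inter> Cz H) \<and> card H * card (Cz H) = ?n * card (H \<inter> Cz H)"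
        using r(3) eq m p by simp
      moreover have "p^2 * (p^2 * x) = p^4 * x" for x :: nat by (simp add: power2_eq_square power4_eq_xxxx)
      ultimately show ?thesis using a by metis
    qed
    ultimately show ?thesis by blast
  qed
qed


lemma cent_single_center:
  assumes xc: "x \<in> carrier G" and e: "Cz {x} = carrier G" shows "x \<in> grp_center G"
proof -
  have "x \<otimes> h = h \<otimes> x" if h: "h \<in> carrier G" for h
  proof -
    have "h \<in> Cz {x}" using e h by simp
    thus ?thesis unfolding centralizer_def by simp
  qed
  thus ?thesis using xc unfolding grp_center_def by blast
qed

lemma cent_center: "Cz (grp_center G) = carrier G"
  unfolding grp_center_def centralizer_def by auto

lemma cent_carrier: "Cz (carrier G) = grp_center G"
  using center_eq by simp

lemma CD_from_closed:
  assumes fin: "finite (carrier G)"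
    and bnd: "\<And>H. subgroup H G \<Longrightarrow> Cz (Cz H) = H \<Longrightarrow> cd_measure G H \<le> M"
    and H0: "subgroup H0 G" and e0: "cd_measure G H0 = M"
  shows "cd_max G = M" and "CD G = {H. subgroup H G \<and> Cz (Cz H) = H \<and> cd_measure G H = M}"
proof -
  have gb: "cd_measure G H \<le> M" if H: "subgroup H G" for H
  proof -
    have Hc: "H \<subseteq> carrier G" using H subgroup.subset by blast
    have s: "subgroup (Cz (Cz H)) G" using cent_subgroup cent_sub by blast
    have "Cz (Cz (Cz (Cz H))) = Cz (Cz H)" by (rule cent3[OF cent_sub])
    hence "cd_measure G (Cz (Cz H)) \<le> M" by (rule bnd[OF s])
    thus ?thesis using reduce(1)[OF fin H] by linarith
  qed
  show cm: "cd_max G = M" by (rule cd_max_eq[OF fin gb H0 e0])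
  show "CD G = {H. subgroup H G \<and> Cz (Cz H) = H \<and> cd_measure G H = M}"
  proof
    show "CD G \<subseteq> {H. subgroup H G \<and> Cz (Cz H) = H \<and> cd_measure G H = M}"
    proof
      fix H assume H: "H \<in> CD G"
      have "Cz (Cz H) = H" by (rule CD_closed[OF fin H])
      moreover have "subgroup H G \<and> cd_measure G H = M" using H unfolding CD_iff cm .
      ultimately show "H \<in> {H. subgroup H G \<and> Cz (Cz H) = H \<and> cd_measure G H = M}" by simp
    qed
    show "{H. subgroup H G \<and> Cz (Cz H) = H \<and> cd_measure G H = M} \<subseteq> CD G"
    proof
      fix H assume "H \<in> {H. subgroup H G \<and> Cz (Cz H) = H \<and> cd_measure G H = M}"
      thus "H \<in> CD G" unfolding CD_iff cm by simp
    qed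
  qed
qed

lemma P1:
  assumes fin: "finite (carrier G)" and cg: "comm_group G"
  shows "CD G = {carrier G}"
proof -
  have Cc: "Cz H = carrier G" if "H \<subseteq> carrier G" for H
  proof -
    interpret comm_group G by (rule cg)
    show ?thesis using that m_comm unfolding centralizer_def by blast
  qed
  let ?n = "card (carrier G)"
  have bnd: "cd_measure G H \<le> ?n * ?n" if H: "subgroup H G" for H
  proof -
    have Hc: "H \<subseteq> carrier G" using H subgroup.subset by blast
    show ?thesis unfolding cd_measure_def Cc[OF Hc] using card_mono[OF fin Hc] by simp
  qed
  have e: "cd_measure G (carrier G) = ?n * ?n" unfolding cd_measure_def Cc[OF subset_refl] ..
  have cm: "cd_max G = ?n * ?n" by (rule cd_max_eq[OF fin bnd subgroup_self e])
  have npos: "?n > 0" using sub_card_pos[OF fin subgroup_self] .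
  show ?thesis
  proof
    show "CD G \<subseteq> {carrier G}"
    proof
      fix H assume "H \<in> CD G"
      hence H: "subgroup H G" and eq: "cd_measure G H = ?n * ?n" using CD_iff cm by auto
      have Hc: "H \<subseteq> carrier G" using H subgroup.subset by blast
      have "card H = ?n" using eq npos unfolding cd_measure_def Cc[OF Hc] by simp
      thus "H \<in> {carrier G}" using card_subset_eq[OF fin Hc] by simp
    qed
    show "{carrier G} \<subseteq> CD G" using CD_iff cm e subgroup_self by simp
  qed
qed

lemma P3:
  assumes fin: "finite (carrier G)" and SP: "SPp G p" and p2: "p \<ge> 2"
    and A: "subgroup A G" and Asc: "Cz A = A"
    and Amax: "\<And>B. subgroup B G \<Longrightarrow> Cz B = B \<Longrightarrow> card B \<le> card A"
    and nA: "card (carrier G) = p * card A" and lt: "p^2 * card (grp_center G) < card (carrier G)"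
  shows "CD G = {A}"
proof -
  let ?n = "card (carrier G)" and ?z = "card (grp_center G)" and ?a = "card A"
  have npos: "?n > 0" using sub_card_pos[OF fin subgroup_self] .
  have apos: "?a > 0" using sub_card_pos[OF fin A] .
  have n2: "?n^2 = p^2 * ?a^2" using nA by (simp add: power_mult_distrib)
  have zn: "?z * ?n < ?a * ?a"
  proof -
    have h1: "(p^2 * ?z) * ?n < ?n * ?n" using lt npos by (rule mult_less_mono1)
    have h2: "?n * ?n = p^2 * (?a * ?a)" using nA by (simp add: power2_eq_square algebra_simps)
    have "p^2 * (?z * ?n) < p^2 * (?a * ?a)" using h1 h2 by (simp add: mult.assoc)
    thus ?thesis by (metis mult_less_cancel1)
  qed
  have bnd: "cd_measure G H \<le> ?a * ?a \<and> (cd_measure G H = ?a * ?a \<longrightarrow> Cz H = H \<and> card H = ?a)"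
    if H: "subgroup H G" and cl: "Cz (Cz H) = H" for H
  proof -
    have p0: "p > 0" using p2 by simp
    from CB[OF fin SP p0 H cl] show ?thesis
    proof (elim disjE)
      assume sc: "Cz H = H"
      have "card H \<le> ?a" using Amax[OF H sc] .
      hence "card H * card H \<le> ?a * ?a" using mult_le_mono by blast
      moreover have "card H * card H = ?a * ?a \<Longrightarrow> card H = ?a"
      proof (rule ccontr)
        assume e: "card H * card H = ?a * ?a" and ne: "card H \<noteq> ?a"
        hence "card H < ?a" using \<open>card H \<le> ?a\<close> by simp
        hence "card H * card H < ?a * ?a" using apos by (intro mult_strict_mono) auto
        thus False using e by simp
      qed
      ultimately show ?thesis unfolding cd_measure_def sc by auto
    next
      assume "H = grp_center G \<and> Cz H = carrier G"
      thus ?thesis using zn unfolding cd_measure_def by (simp add: mult.commute cent_center cent_carrier)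
    next
      assume "H = carrier G \<and> Cz H = grp_center G"
      thus ?thesis using zn unfolding cd_measure_def by (simp add: mult.commute cent_center cent_carrier)
    next
      assume a: "p^4 * cd_measure G H \<le> (card (carrier G))^2 \<and> (p^4 * cd_measure G H = (card (carrier G))^2 \<longrightarrow>
    (H \<subset> Cz H \<and> p * card (Cz H) = card (carrier G) \<and> p^2 * card H = card (Cz H)) \<or>
    (Cz H \<subset> H \<and> p * card H = card (carrier G) \<and> p^2 * card (Cz H) = card H) \<or>
    (p^2 * card H = card (carrier G) \<and> p^2 * card (Cz H) = card (carrier G) \<and> H \<inter> Cz H \<subseteq> grp_center G \<and> p^4 * card (H \<inter> Cz H) = card (carrier G)))"
      hence "p^2 * (p^2 * cd_measure G H) \<le> p^2 * ?a^2" using n2 by (simp add: power4_eq_xxxx power2_eq_square algebra_simps)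
      moreover have pp: "0 < p^2" using p0 by simp
      ultimately have "p^2 * cd_measure G H \<le> ?a^2" using nat_mult_le_cancel1[OF pp] by blast
      moreover have "4 * cd_measure G H \<le> p^2 * cd_measure G H"
      proof -
        have "2 * 2 \<le> p * p" using p2 mult_le_mono by blast
        hence "4 \<le> p^2" by (simp add: power2_eq_square)
        thus ?thesis by (rule mult_le_mono1)
      qed
      moreover have "?a^2 = ?a * ?a" by (simp add: power2_eq_square)
      ultimately have "4 * cd_measure G H \<le> ?a * ?a" by linarith
      moreover have "?a * ?a > 0" using apos by simp
      ultimately show ?thesis by linarith
    qed
  qed
  have eA: "cd_measure G A = ?a * ?a" unfolding cd_measure_def Asc ..
  have clA: "Cz (Cz A) = A" using Asc by simp
  have bnd': "cd_measure G H \<le> ?a * ?a" if "subgroup H G" "Cz (Cz H) = H" for H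
    using bnd[OF that] by (rule conjunct1)
  note C = CD_from_closed[OF fin bnd' A eA]
  have CDe: "CD G = {H. subgroup H G \<and> Cz (Cz H) = H \<and> cd_measure G H = ?a * ?a}"
    by (rule C(2))
  have Ac0: "A \<subseteq> carrier G" using A subgroup.subset by blast
  have ZA: "grp_center G \<subseteq> A" using center_sub_cent[OF Ac0] Asc by simp
  have uniq: "H = A" if H: "subgroup H G" and sc: "Cz H = H" and cH: "card H = ?a" for H
  proof (rule ccontr)
    assume ne: "H \<noteq> A"
    have Hc: "H \<subseteq> carrier G" using H subgroup.subset by blast
    have Ac: "A \<subseteq> carrier G" using A subgroup.subset by blast
    have nsub: "\<not> H \<subseteq> A" using card_subset_eq[OF sub_finite[OF fin A]] cH ne by blast
    have IZ: "A \<inter> H \<subseteq> grp_center G"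
    proof
      fix x assume x: "x \<in> A \<inter> H"
      have xc: "x \<in> carrier G" using x Ac by blast
      have xA: "x \<in> Cz A" using x Asc by simp
      have xH: "x \<in> Cz H" using x sc by simp
      have sub: "A \<union> H \<subseteq> Cz {x}"
      proof
        fix y assume y: "y \<in> A \<union> H"
        have yc: "y \<in> carrier G" using y Ac Hc by blast
        have "x \<otimes> y = y \<otimes> x" using y xA xH unfolding cent_iff by blast
        thus "y \<in> Cz {x}" using yc unfolding cent_iff by simp
      qed
      have Cs: "subgroup (Cz {x}) G" using cent_subgroup xc by blast
      have "A \<subset> Cz {x}" using sub nsub by blast
      hence "p * ?a \<le> card (Cz {x})" using SP A Cs ZA unfolding SPp_def by blast
      moreover have "card (Cz {x}) \<le> ?n" using card_mono[OF fin cent_sub] .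
      ultimately have "card (Cz {x}) = ?n" using nA by simp
      hence "Cz {x} = carrier G" using card_subset_eq[OF fin cent_sub] by blast
      thus "x \<in> grp_center G" using cent_single_center xc by blast
    qed
    have "?a * ?a \<le> card (pset A H) * card (A \<inter> H)" using card_pset[OF fin A H] cH by simp
    also have "\<dots> \<le> ?n * ?z"
      using card_mono[OF fin pset_sub[OF Ac Hc subgroup_self]]
        card_mono[OF sub_finite[OF fin center_subgroup] IZ] by (rule mult_le_mono)
    finally show False using zn by (simp add: mult.commute)
  qed
  show ?thesis
  proof
    show "CD G \<subseteq> {A}"
    proof
      fix H assume "H \<in> CD G"
      hence H: "subgroup H G" and cl: "Cz (Cz H) = H" and e: "cd_measure G H = ?a * ?a" using CDe by auto
      have "Cz H = H \<and> card H = ?a" using bnd[OF H cl] e by blast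
      thus "H \<in> {A}" using uniq H by blast
    qed
    show "{A} \<subseteq> CD G" using CDe A clA eA by blast
  qed
qed


lemma sq_le: "(x::nat) \<le> y \<Longrightarrow> x * x \<le> y * y" by (rule mult_le_mono)

lemma sq_inj: "(x::nat) * x = y * y \<Longrightarrow> x = y"
  using power2_eq_imp_eq[of x y] by (simp add: power2_eq_square)

lemma sq_le_rev: "(x::nat) * x \<le> y * y \<Longrightarrow> x \<le> y"
proof (rule ccontr)
  assume a: "x * x \<le> y * y" and "\<not> x \<le> y"
  hence "y < x" by simp
  hence "y * y < x * x" by (intro mult_strict_mono) auto
  thus False using a by simp
qed

lemma p4_ge: "(p::nat) \<ge> 2 \<Longrightarrow> 4 \<le> p^2"
proof -
  assume "p \<ge> 2"
  hence "2 * 2 \<le> p * p" using mult_le_mono by blast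
  thus "4 \<le> p^2" by (simp add: power2_eq_square)
qed

lemma P4a:
  assumes fin: "finite (carrier G)" and SP: "SPp G p" and p2: "p \<ge> 2"
    and A: "subgroup A G" and Asc: "Cz A = A"
    and Amax: "\<And>B. subgroup B G \<Longrightarrow> Cz B = B \<Longrightarrow> card B \<le> card A"
    and nA: "card (carrier G) = p^2 * card A" and lt: "card (carrier G) < p^4 * card (grp_center G)"
  shows "CD G = {grp_center G, carrier G}"
proof -
  let ?n = "card (carrier G)" and ?z = "card (grp_center G)" and ?a = "card A"
  have npos: "?n > 0" using sub_card_pos[OF fin subgroup_self] .
  have p0: "p > 0" using p2 by simp
  have p4: "p^4 > 0" using p0 by simp
  have nn: "?n * ?n < p^4 * (?n * ?z)"
  proof -
    have "?n * ?n < (p^4 * ?z) * ?n" using lt npos by (rule mult_less_mono1)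
    thus ?thesis by (simp add: algebra_simps)
  qed
  have aa: "?a * ?a < ?n * ?z"
  proof -
    have "?n * ?n = p^4 * (?a * ?a)" using nA by (simp add: power2_eq_square power4_eq_xxxx algebra_simps)
    hence "p^4 * (?a * ?a) < p^4 * (?n * ?z)" using nn by simp
    thus ?thesis using nat_mult_less_cancel1[OF p4] by blast
  qed
  have bnd: "cd_measure G H \<le> ?n * ?z \<and> (cd_measure G H = ?n * ?z \<longrightarrow> H = grp_center G \<or> H = carrier G)"
    if H: "subgroup H G" and cl: "Cz (Cz H) = H" for H
  proof -
    from CB[OF fin SP p0 H cl] show ?thesis
    proof (elim disjE)
      assume sc: "Cz H = H"
      have "card H * card H \<le> ?a * ?a" using sq_le Amax[OF H sc] by blast
      thus ?thesis using aa unfolding cd_measure_def sc by simp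
    next
      assume "H = grp_center G \<and> Cz H = carrier G"
      thus ?thesis unfolding cd_measure_def by (simp add: mult.commute cent_center cent_carrier)
    next
      assume "H = carrier G \<and> Cz H = grp_center G"
      thus ?thesis unfolding cd_measure_def by (simp add: mult.commute cent_center cent_carrier)
    next
      assume "p^4 * cd_measure G H \<le> (card (carrier G))^2 \<and> (p^4 * cd_measure G H = (card (carrier G))^2 \<longrightarrow>
    (H \<subset> Cz H \<and> p * card (Cz H) = card (carrier G) \<and> p^2 * card H = card (Cz H)) \<or>
    (Cz H \<subset> H \<and> p * card H = card (carrier G) \<and> p^2 * card (Cz H) = card H) \<or>
    (p^2 * card H = card (carrier G) \<and> p^2 * card (Cz H) = card (carrier G) \<and> H \<inter> Cz H \<subseteq> grp_center G \<and> p^4 * card (H \<inter> Cz H) = card (carrier G)))"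
      hence "p^4 * cd_measure G H \<le> ?n * ?n" by (simp add: power2_eq_square)
      hence "p^4 * cd_measure G H < p^4 * (?n * ?z)" using nn by linarith
      hence "cd_measure G H < ?n * ?z" using nat_mult_less_cancel1[OF p4] by blast
      thus ?thesis by simp
    qed
  qed
  have Zs: "subgroup (grp_center G) G" by (rule center_subgroup)
  have eZ: "cd_measure G (grp_center G) = ?n * ?z" unfolding cd_measure_def cent_center by simp
  have bnd': "cd_measure G H \<le> ?n * ?z" if "subgroup H G" "Cz (Cz H) = H" for H
    using bnd[OF that] by (rule conjunct1)
  note C = CD_from_closed[OF fin bnd' Zs eZ]
  have clZ: "Cz (Cz (grp_center G)) = grp_center G" by (simp add: cent_center cent_carrier)
  have clG: "Cz (Cz (carrier G)) = carrier G" by (simp add: cent_center cent_carrier)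
  have eG: "cd_measure G (carrier G) = ?n * ?z" unfolding cd_measure_def cent_carrier by simp
  show ?thesis
  proof
    show "CD G \<subseteq> {grp_center G, carrier G}"
    proof
      fix H assume "H \<in> CD G"
      hence H: "subgroup H G" and cl: "Cz (Cz H) = H" and e: "cd_measure G H = ?n * ?z" using C(2) by auto
      show "H \<in> {grp_center G, carrier G}" using bnd[OF H cl] e by blast
    qed
    show "{grp_center G, carrier G} \<subseteq> CD G" using C(2) Zs clZ eZ subgroup_self clG eG by blast
  qed
qed

lemma QA:
  assumes fF: "finite F" and cF: "card F = p + 1" and AF: "A \<in> F" and lh: "lo \<noteq> hi"
    and lF: "lo \<notin> F" and hF: "hi \<notin> F" and sub: "\<forall>B\<in>F. lo \<subseteq> B \<and> B \<subseteq> hi" and lohi: "lo \<subseteq> hi"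
    and inc: "\<forall>B\<in>F. \<forall>B'\<in>F. B \<subseteq> B' \<longrightarrow> B = B'"
  shows "\<exists>As. {lo, hi} \<union> F = {lo, A, hi} \<union> As ` {1..p} \<and> quasi_antichain ({lo, hi} \<union> F) (p + 1)
     \<and> (\<forall>i\<in>{1..p}. As i \<in> F)"
proof -
  have fF': "finite (F - {A})" using fF by simp
  have cF': "card (F - {A}) = p" using cF AF fF by simp
  obtain h where h: "bij_betw h {1..card (F - {A})} (F - {A})" using ex_bij_betw_nat_finite_1[OF fF'] by blast
  have img: "h ` {1..p} = F - {A}" using h cF' unfolding bij_betw_def by simp
  have L: "{lo, hi} \<union> F = {lo, A, hi} \<union> h ` {1..p}" using img AF by blast
  have D: "({lo, hi} \<union> F) - {lo, hi} = F" using lF hF by blast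
  have q1: "lo \<in> {lo, hi} \<union> F" "hi \<in> {lo, hi} \<union> F" by auto
  have q2: "\<forall>x\<in>{lo, hi} \<union> F. lo \<subseteq> x \<and> x \<subseteq> hi" using sub lohi by blast
  have q3: "finite ({lo, hi} \<union> F - {lo, hi})" unfolding D by (rule fF)
  have q4: "card ({lo, hi} \<union> F - {lo, hi}) = p + 1" unfolding D by (rule cF)
  have q5: "\<forall>x\<in>{lo, hi} \<union> F - {lo, hi}. \<forall>y\<in>{lo, hi} \<union> F - {lo, hi}. x \<subseteq> y \<longrightarrow> x = y"
    unfolding D by (rule inc)
  have Q: "quasi_antichain ({lo, hi} \<union> F) (p + 1)"
    unfolding quasi_antichain_def using q1 q2 q3 q4 q5 lh by blast
  have "\<forall>i\<in>{1..p}. h i \<in> F" using img by blast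
  thus ?thesis using L Q by blast
qed

lemma P2:
  assumes fin: "finite (carrier G)" and pr: "Factorial_Ring.prime p"
    and A: "subgroup A G" and Asc: "Cz A = A"
    and Amax: "\<And>B. subgroup B G \<Longrightarrow> Cz B = B \<Longrightarrow> card B \<le> card A"
    and nz: "card (carrier G) = p^2 * card (grp_center G)"
  shows "\<exists>As :: nat \<Rightarrow> 'a set.
          CD G = {grp_center G, A, carrier G} \<union> As ` {1..p} \<and>
          quasi_antichain (CD G) (p + 1) \<and>
          (\<forall>i\<in>{1..p}. comm_group (G\<lparr>carrier := As i\<rparr>))"
proof -
  let ?n = "card (carrier G)" and ?z = "card (grp_center G)" and ?a = "card A"
  have p2: "p \<ge> 2" using pr prime_ge_2_nat by blast
  have p0: "p > 0" using p2 by simp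
  have SP: "SPp G p" using SP_pow[OF fin pr nz] .
  have zpos: "?z > 0" using sub_card_pos[OF fin center_subgroup] .
  have npos: "?n > 0" using sub_card_pos[OF fin subgroup_self] .
  have pp4: "4 \<le> p^2" using p4_ge[OF p2] .
  have nzpos: "?n * ?z > 0" using npos zpos by simp
  have ZG: "grp_center G \<noteq> carrier G"
  proof
    assume "grp_center G = carrier G"
    hence "?z = p^2 * ?z" using nz by simp
    thus False using zpos pp4 by simp
  qed
  have Gs: "subgroup (carrier G) G" by (rule subgroup_self)
  have bnd: "cd_measure G H \<le> ?n * ?z \<and> (cd_measure G H = ?n * ?z \<longrightarrow>
      H = grp_center G \<or> H = carrier G \<or> (Cz H = H \<and> p * card H = ?n))"
    if H: "subgroup H G" and cl: "Cz (Cz H) = H" for H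
  proof -
    have Hc: "H \<subseteq> carrier G" using H subgroup.subset by blast
    from CB[OF fin SP p0 H cl] show ?thesis
    proof (elim disjE)
      assume sc: "Cz H = H"
      have ZH: "grp_center G \<subseteq> H" using center_sub_cent[OF Hc] sc by simp
      have HG: "H \<noteq> carrier G"
      proof
        assume "H = carrier G"
        hence "Cz (carrier G) = carrier G" using sc by simp
        thus False using ZG cent_carrier by simp
      qed
      have "p * card H \<le> ?n" using SP H Gs ZH HG Hc unfolding SPp_def by blast
      hence 1: "(p * card H) * (p * card H) \<le> ?n * ?n" by (rule sq_le)
      have e1: "(p * card H) * (p * card H) = p^2 * (card H * card H)" by (simp add: power2_eq_square algebra_simps)
      have e2: "?n * ?n = p^2 * (?n * ?z)" using nz by (simp add: algebra_simps)
      have pp: "p^2 > 0" using p0 by simp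
      have le: "card H * card H \<le> ?n * ?z" using 1 e1 e2 nat_mult_le_cancel1[OF pp] by metis
      have eq: "p * card H = ?n" if "card H * card H = ?n * ?z"
      proof -
        have "(p * card H) * (p * card H) = p^2 * (card H * card H)" by (rule e1)
        also have "\<dots> = p^2 * (?n * ?z)" using that by simp
        also have "\<dots> = ?n * ?n" by (rule e2[symmetric])
        finally show ?thesis by (rule sq_inj)
      qed
      show ?thesis using le eq sc unfolding cd_measure_def sc by simp
    next
      assume "H = grp_center G \<and> Cz H = carrier G"
      thus ?thesis unfolding cd_measure_def by (simp add: mult.commute cent_center cent_carrier)
    next
      assume "H = carrier G \<and> Cz H = grp_center G"
      thus ?thesis unfolding cd_measure_def by (simp add: mult.commute cent_center cent_carrier)
    next
      assume "p^4 * cd_measure G H \<le> (card (carrier G))^2 \<and> (p^4 * cd_measure G H = (card (carrier G))^2 \<longrightarrow>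
    (H \<subset> Cz H \<and> p * card (Cz H) = card (carrier G) \<and> p^2 * card H = card (Cz H)) \<or>
    (Cz H \<subset> H \<and> p * card H = card (carrier G) \<and> p^2 * card (Cz H) = card H) \<or>
    (p^2 * card H = card (carrier G) \<and> p^2 * card (Cz H) = card (carrier G) \<and> H \<inter> Cz H \<subseteq> grp_center G \<and> p^4 * card (H \<inter> Cz H) = card (carrier G)))"
      hence "p^4 * cd_measure G H \<le> ?n * ?n" by (simp add: power2_eq_square)
      moreover have "?n * ?n = p^2 * (?n * ?z)" using nz by (simp add: algebra_simps)
      moreover have "p^4 * cd_measure G H = p^2 * (p^2 * cd_measure G H)" by (simp add: power4_eq_xxxx power2_eq_square)
      moreover have pp: "p^2 > 0" using p0 by simp
      ultimately have "p^2 * cd_measure G H \<le> ?n * ?z" using nat_mult_le_cancel1[OF pp] by metis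
      moreover have "4 * cd_measure G H \<le> p^2 * cd_measure G H" using pp4 by (rule mult_le_mono1)
      ultimately have "4 * cd_measure G H \<le> ?n * ?z" by linarith
      hence "cd_measure G H < ?n * ?z" using nzpos by linarith
      thus ?thesis by simp
    qed
  qed
  have Zs: "subgroup (grp_center G) G" by (rule center_subgroup)
  have eZ: "cd_measure G (grp_center G) = ?n * ?z" unfolding cd_measure_def cent_center by simp
  have bnd': "cd_measure G H \<le> ?n * ?z" if "subgroup H G" "Cz (Cz H) = H" for H
    using bnd[OF that] by (rule conjunct1)
  note C = CD_from_closed[OF fin bnd' Zs eZ]
  have clZ: "Cz (Cz (grp_center G)) = grp_center G" by (simp add: cent_center cent_carrier)
  have clG: "Cz (Cz (carrier G)) = carrier G" by (simp add: cent_center cent_carrier)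
  have eG: "cd_measure G (carrier G) = ?n * ?z" unfolding cd_measure_def cent_carrier by simp
  define F where "F = {B. subgroup B G \<and> grp_center G \<subseteq> B \<and> B \<subseteq> carrier G \<and> card B = p * ?z}"
  have Yd: "grp_center G = carrier G \<inter> Cz (carrier G)" using cent_carrier center_subgroup subgroup.subset by blast
  note cnt = CNT[OF fin SP p2 Gs Yd nz subset_refl]
  have fF: "finite F" using cnt(1) unfolding F_def .
  have cF: "card F = p + 1" using cnt(2) unfolding F_def .
  have Fsc: "Cz B = B" if B: "B \<in> F" for B
  proof -
    have Bs: "subgroup B G" and ZB: "grp_center G \<subseteq> B" and cB: "card B = p * ?z" using B unfolding F_def by auto
    have Bc: "B \<subseteq> carrier G" using Bs subgroup.subset by blast
    have ab: "B \<subseteq> Cz B" using AB[OF fin SP p2 Bs ZB center_sub_cent[OF Bc] subset_refl cB] .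
    have "cd_measure G B \<le> ?n * ?z" using cd_max_ge[OF fin Bs] C(1) by simp
    hence "card B * card (Cz B) \<le> card B * card B" unfolding cd_measure_def using nz cB
      by (simp add: power2_eq_square algebra_simps)
    hence "card (Cz B) \<le> card B" using sub_card_pos[OF fin Bs] by simp
    moreover have fC: "finite (Cz B)" using fin cent_sub finite_subset by blast
    moreover have "card B \<le> card (Cz B)" using card_mono[OF fC ab] .
    ultimately have "card B = card (Cz B)" by simp
    thus ?thesis using card_subset_eq[OF fC ab] by simp
  qed
  have FCD: "F \<subseteq> CD G"
  proof
    fix B assume B: "B \<in> F"
    have Bs: "subgroup B G" and cB: "card B = p * ?z" using B unfolding F_def by auto
    have sc: "Cz B = B" using Fsc[OF B] .
    have "cd_measure G B = ?n * ?z" unfolding cd_measure_def sc using cB nz by (simp add: power2_eq_square algebra_simps)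
    thus "B \<in> CD G" using C(2) Bs sc by simp
  qed
  have CDe: "CD G = {grp_center G, carrier G} \<union> F"
  proof
    show "CD G \<subseteq> {grp_center G, carrier G} \<union> F"
    proof
      fix H assume "H \<in> CD G"
      hence H: "subgroup H G" and cl: "Cz (Cz H) = H" and e: "cd_measure G H = ?n * ?z" using C(2) by auto
      have Hc: "H \<subseteq> carrier G" using H subgroup.subset by blast
      have "H = grp_center G \<or> H = carrier G \<or> (Cz H = H \<and> p * card H = ?n)" using bnd[OF H cl] e by blast
      moreover have "H \<in> F" if sc: "Cz H = H" and c: "p * card H = ?n"
      proof -
        have ZH: "grp_center G \<subseteq> H" using center_sub_cent[OF Hc] sc by simp
        have "card H = p * ?z" using c nz p0 by (simp add: power2_eq_square)
        thus ?thesis unfolding F_def using H ZH Hc by blast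
      qed
      ultimately show "H \<in> {grp_center G, carrier G} \<union> F" by blast
    qed
    show "{grp_center G, carrier G} \<union> F \<subseteq> CD G" using FCD C(2) Zs clZ eZ Gs clG eG by blast
  qed
  have AF: "A \<in> F"
  proof -
    have "F \<noteq> {}" using cF by auto
    then obtain B where B: "B \<in> F" by blast
    have "card B \<le> ?a" using Amax[OF _ Fsc[OF B]] B unfolding F_def by blast
    hence 1: "p * ?z \<le> ?a" using B unfolding F_def by simp
    have clA: "Cz (Cz A) = A" using Asc by simp
    have "?a * ?a \<le> ?n * ?z" using bnd'[OF A clA] unfolding cd_measure_def Asc .
    hence "?a * ?a \<le> (p * ?z) * (p * ?z)" using nz by (simp add: power2_eq_square algebra_simps)
    hence "?a \<le> p * ?z" by (rule sq_le_rev)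
    hence "?a = p * ?z" using 1 by simp
    moreover have "grp_center G \<subseteq> A"
    proof -
      have "A \<subseteq> carrier G" using A subgroup.subset by blast
      thus ?thesis using center_sub_cent[of A] Asc by simp
    qed
    ultimately show ?thesis unfolding F_def using A subgroup.subset by blast
  qed
  have ZF: "grp_center G \<notin> F" using zpos p2 unfolding F_def by auto
  have GF: "carrier G \<notin> F"
  proof
    assume "carrier G \<in> F"
    hence "?n = p * ?z" unfolding F_def by blast
    thus False using nz zpos p2 by (simp add: power2_eq_square)
  qed
  have sub: "\<forall>B\<in>F. grp_center G \<subseteq> B \<and> B \<subseteq> carrier G" unfolding F_def by blast
  have inc: "\<forall>B\<in>F. \<forall>B'\<in>F. B \<subseteq> B' \<longrightarrow> B = B'"
  proof (intro ballI impI)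
    fix B B' assume B: "B \<in> F" and B': "B' \<in> F" and s: "B \<subseteq> B'"
    have "finite B'" "card B = card B'" using B B' sub_finite[OF fin] unfolding F_def by auto
    thus "B = B'" using card_subset_eq[OF _ s] by simp
  qed
  have ZsubG: "grp_center G \<subseteq> carrier G" using center_subgroup subgroup.subset by blast
  obtain As where As: "{grp_center G, carrier G} \<union> F = {grp_center G, A, carrier G} \<union> As ` {1..p}"
    and Q: "quasi_antichain ({grp_center G, carrier G} \<union> F) (p + 1)" and AsF: "\<forall>i\<in>{1..p}. As i \<in> F"
    using QA[OF fF cF AF ZG ZF GF sub ZsubG inc] by blast
  have "\<forall>i\<in>{1..p}. comm_group (G\<lparr>carrier := As i\<rparr>)"
  proof
    fix i assume "i \<in> {1..p}"
    hence B: "As i \<in> F" using AsF by blast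
    have "subgroup (As i) G" using B unfolding F_def by blast
    thus "comm_group (G\<lparr>carrier := As i\<rparr>)" using comm_sub Fsc[OF B] by simp
  qed
  thus ?thesis unfolding CDe using As Q by auto
qed


lemma P4bnd:
  assumes fin: "finite (carrier G)" and SP: "SPp G p" and p2: "p \<ge> 2"
    and A: "subgroup A G" and Asc: "Cz A = A"
    and Amax: "\<forall>B. subgroup B G \<longrightarrow> Cz B = B \<longrightarrow> card B \<le> card A"
    and nA: "card (carrier G) = p^2 * card A" and ge: "p^4 * card (grp_center G) \<le> card (carrier G)"
    and H: "subgroup H G" and cl: "Cz (Cz H) = H"
  shows "cd_measure G H \<le> card A * card A \<and> (cd_measure G H = card A * card A \<longrightarrow>
     (Cz H = H \<and> card H = card A) \<or>
     ((H = grp_center G \<or> H = carrier G) \<and> p^4 * card (grp_center G) = card (carrier G)) \<or>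
     (H \<subset> Cz H \<and> p * card (Cz H) = card (carrier G) \<and> p^2 * card H = card (Cz H)) \<or>
     (Cz H \<subset> H \<and> p * card H = card (carrier G) \<and> p^2 * card (Cz H) = card H) \<or>
     (p^2 * card H = card (carrier G) \<and> p^2 * card (Cz H) = card (carrier G) \<and> H \<inter> Cz H \<subseteq> grp_center G \<and> p^4 * card (H \<inter> Cz H) = card (carrier G)))"
proof -
  let ?n = "card (carrier G)" and ?z = "card (grp_center G)" and ?a = "card A"
  have npos: "?n > 0" using sub_card_pos[OF fin subgroup_self] .
  have p0: "p > 0" using p2 by simp
  have p4: "p^4 > 0" using p0 by simp
  have nn: "?n * ?n = p^4 * (?a * ?a)" using nA by (simp add: power2_eq_square power4_eq_xxxx algebra_simps)
  have Zcase: "?n * ?z \<le> ?a * ?a \<and> (?n * ?z = ?a * ?a \<longrightarrow> p^4 * ?z = ?n)"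
  proof -
    have "p^4 * (?n * ?z) = ?n * (p^4 * ?z)" by simp
    also have "\<dots> \<le> ?n * ?n" using ge by simp
    finally have 1: "p^4 * (?n * ?z) \<le> p^4 * (?a * ?a)" using nn by simp
    have "?n * ?z = ?a * ?a \<Longrightarrow> p^4 * ?z = ?n"
    proof -
      assume "?n * ?z = ?a * ?a"
      hence "?n * (p^4 * ?z) = ?n * ?n" using nn by (simp add: algebra_simps)
      thus "p^4 * ?z = ?n" using npos by simp
    qed
    thus ?thesis using 1 nat_mult_le_cancel1[OF p4] by blast
  qed
  from CB[OF fin SP p0 H cl] show ?thesis
  proof (elim disjE)
    assume sc: "Cz H = H"
    have le: "card H \<le> ?a" using Amax H sc by blast
    hence "card H * card H \<le> ?a * ?a" by (rule sq_le)
    moreover have "card H * card H = ?a * ?a \<Longrightarrow> card H = ?a" by (rule sq_inj)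
    ultimately show ?thesis unfolding cd_measure_def sc using sc by blast
  next
    assume a: "H = grp_center G \<and> Cz H = carrier G"
    hence "cd_measure G H = ?n * ?z" unfolding cd_measure_def by (simp add: cent_center)
    thus ?thesis using Zcase a by auto
  next
    assume a: "H = carrier G \<and> Cz H = grp_center G"
    hence "cd_measure G H = ?n * ?z" unfolding cd_measure_def by (simp add: cent_carrier)
    thus ?thesis using Zcase a by auto
  next
    assume a: "p^4 * cd_measure G H \<le> (card (carrier G))^2 \<and> (p^4 * cd_measure G H = (card (carrier G))^2 \<longrightarrow>
    (H \<subset> Cz H \<and> p * card (Cz H) = card (carrier G) \<and> p^2 * card H = card (Cz H)) \<or>
    (Cz H \<subset> H \<and> p * card H = card (carrier G) \<and> p^2 * card (Cz H) = card H) \<or>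
    (p^2 * card H = card (carrier G) \<and> p^2 * card (Cz H) = card (carrier G) \<and> H \<inter> Cz H \<subseteq> grp_center G \<and> p^4 * card (H \<inter> Cz H) = card (carrier G)))"
    have e2: "?n^2 = p^4 * (?a * ?a)" using nn by (simp add: power2_eq_square)
    have "p^4 * cd_measure G H \<le> p^4 * (?a * ?a)" using a e2 by simp
    hence 1: "cd_measure G H \<le> ?a * ?a" using nat_mult_le_cancel1[OF p4] by blast
    have "cd_measure G H = ?a * ?a \<Longrightarrow> p^4 * cd_measure G H = ?n^2" using e2 by simp
    thus ?thesis using 1 a by blast
  qed
qed

lemma subc_sub: "T \<subseteq> carrier G \<Longrightarrow> T \<subseteq> Cz (sub_center G T)"
  unfolding sub_center_eq centralizer_def by auto

lemma P4b:
  assumes fin: "finite (carrier G)" and pr: "Factorial_Ring.prime p"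
    and A: "subgroup A G" and Asc: "Cz A = A"
    and Amax: "\<And>B. subgroup B G \<Longrightarrow> Cz B = B \<Longrightarrow> card B \<le> card A"
    and nA: "card (carrier G) = p^2 * card A" and nz: "card (carrier G) = p^4 * card (grp_center G)"
  shows "(let Ts = {T. subgroup T G \<and> card (carrier G) = p * card T \<and>
                      card (carrier G) = p^3 * card (sub_center G T)};
             As = {B. subgroup B G \<and> B \<noteq> A \<and> card (carrier G) = p^2 * card B \<and>
                      card (carrier G) = p^2 * card (centralizer G B)}
         in CD G = {grp_center G, A, carrier G} \<union> sub_center G ` Ts \<union> As \<union> Ts \<and>
            (Ts \<noteq> {} \<longrightarrow> card As \<ge> p))"
proof -
  let ?n = "card (carrier G)" and ?z = "card (grp_center G)" and ?a = "card A"
  define Ts where "Ts = {T. subgroup T G \<and> ?n = p * card T \<and> ?n = p^3 * card (sub_center G T)}"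
  define As where "As = {B. subgroup B G \<and> B \<noteq> A \<and> ?n = p^2 * card B \<and> ?n = p^2 * card (Cz B)}"
  have p2: "p \<ge> 2" using pr prime_ge_2_nat by blast
  have p0: "p > 0" using p2 by simp
  have SP: "SPp G p" using SP_pow[OF fin pr nz] .
  have npos: "?n > 0" using sub_card_pos[OF fin subgroup_self] .
  have ge: "p^4 * ?z \<le> ?n" using nz by simp
  have Amax': "\<forall>B. subgroup B G \<longrightarrow> Cz B = B \<longrightarrow> card B \<le> card A" using Amax by blast
  note B = P4bnd[OF fin SP p2 A Asc Amax' nA ge]
  have bnd': "cd_measure G H \<le> ?a * ?a" if "subgroup H G" "Cz (Cz H) = H" for H
    using B[OF that] by (rule conjunct1)
  have eA: "cd_measure G A = ?a * ?a" unfolding cd_measure_def Asc ..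
  have clA: "Cz (Cz A) = A" using Asc by simp
  note C = CD_from_closed[OF fin bnd' A eA]
  have nn: "?n * ?n = p^4 * (?a * ?a)" using nA by (simp add: power2_eq_square power4_eq_xxxx algebra_simps)
  have p4: "p^4 > 0" using p0 by simp
  have inCD: "H \<in> CD G" if H: "subgroup H G" and m: "?a * ?a \<le> cd_measure G H" for H
  proof -
    have le: "cd_measure G H \<le> cd_max G" by (rule cd_max_ge[OF fin H])
    have cm: "cd_max G = ?a * ?a" by (rule C(1))
    have eq: "cd_measure G H = cd_max G" using le m unfolding cm by (rule antisym)
    show ?thesis unfolding CD_iff using H eq by (rule conjI)
  qed
  have aa: "?a * ?a = xx" if "p^4 * xx = ?n * ?n" for xx
  proof -
    have "p^4 * (?a * ?a) = p^4 * xx" using trans[OF sym[OF nn] sym[OF that]] .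
    thus ?thesis using nat_mult_eq_cancel1[OF p4] by blast
  qed
  have Zin: "grp_center G \<in> CD G"
  proof -
    have "p^4 * (?z * ?n) = ?n * ?n" using nz by simp
    hence "?a * ?a = ?z * ?n" by (rule aa)
    thus ?thesis using inCD[OF center_subgroup] unfolding cd_measure_def cent_center by simp
  qed
  have Gin: "carrier G \<in> CD G"
  proof -
    have "p^4 * (?n * ?z) = ?n * ?n" using nz by simp
    hence "?a * ?a = ?n * ?z" by (rule aa)
    thus ?thesis using inCD[OF subgroup_self] unfolding cd_measure_def cent_carrier by simp
  qed
  have Ain: "A \<in> CD G" using inCD[OF A] eA by simp
  have Tin: "T \<in> CD G \<and> sub_center G T \<in> CD G" if T: "T \<in> Ts" for T
  proof -
    have Ts: "subgroup T G" and c1: "?n = p * card T" and c2: "?n = p^3 * card (sub_center G T)"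
      using T unfolding Ts_def by auto
    have Tc: "T \<subseteq> carrier G" using Ts subgroup.subset by blast
    have Ss: "subgroup (sub_center G T) G" unfolding sub_center_eq[OF Tc]
      using subgroups_Inter_pair Ts cent_subgroup Tc by blast
    have e: "?a * ?a = card T * card (sub_center G T)"
    proof (rule aa)
      have "p^4 * (card T * card (sub_center G T)) = (p * card T) * (p^3 * card (sub_center G T))"
        by (simp add: power4_eq_xxxx power3_eq_cube algebra_simps)
      moreover have "?n * ?n = (p * card T) * (p^3 * card (sub_center G T))" by (metis c1 c2)
      ultimately show "p^4 * (card T * card (sub_center G T)) = ?n * ?n" by simp
    qed
    have s1: "sub_center G T \<subseteq> Cz T" unfolding sub_center_eq[OF Tc] by blast
    have s2: "T \<subseteq> Cz (sub_center G T)" by (rule subc_sub[OF Tc])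
    have fC: "finite (Cz S)" for S using finite_subset[OF cent_sub fin] .
    have f1: "card (sub_center G T) \<le> card (Cz T)" using card_mono[OF fC s1] .
    have f2: "card T \<le> card (Cz (sub_center G T))" using card_mono[OF fC s2] .
    have "?a * ?a \<le> cd_measure G T" unfolding cd_measure_def e using f1 by simp
    moreover have "?a * ?a \<le> cd_measure G (sub_center G T)" unfolding cd_measure_def e using f2
      by (simp add: mult.commute)
    ultimately show ?thesis using inCD[OF Ts] inCD[OF Ss] by blast
  qed
  have Bin: "B \<in> CD G" if Bm: "B \<in> As" for B
  proof -
    have Bs: "subgroup B G" and c1: "?n = p^2 * card B" and c2: "?n = p^2 * card (Cz B)"
      using Bm unfolding As_def by auto
    have "p^4 * (card B * card (Cz B)) = (p^2 * card B) * (p^2 * card (Cz B))"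
      by (simp add: power4_eq_xxxx power2_eq_square algebra_simps)
    moreover have "?n * ?n = (p^2 * card B) * (p^2 * card (Cz B))" by (metis c1 c2)
    ultimately have "p^4 * (card B * card (Cz B)) = ?n * ?n" by simp
    hence "?a * ?a = cd_measure G B" unfolding cd_measure_def by (rule aa)
    thus ?thesis using inCD[OF Bs] by simp
  qed
  have CDe: "CD G = {grp_center G, A, carrier G} \<union> sub_center G ` Ts \<union> As \<union> Ts"
  proof
    show "CD G \<subseteq> {grp_center G, A, carrier G} \<union> sub_center G ` Ts \<union> As \<union> Ts"
    proof
      fix H assume HC: "H \<in> CD G"
      hence H: "subgroup H G" and cl: "Cz (Cz H) = H" and e: "cd_measure G H = ?a * ?a" using C(2) by auto
      have Hc: "H \<subseteq> carrier G" using H subgroup.subset by blast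
      have Ks: "subgroup (Cz H) G" using cent_subgroup Hc by blast
      have AsI: "H \<in> {grp_center G, A, carrier G} \<union> sub_center G ` Ts \<union> As \<union> Ts"
        if c1: "p^2 * card H = ?n" and c2: "p^2 * card (Cz H) = ?n"
      proof (cases "H = A")
        case True thus ?thesis by blast
      next
        case False thus ?thesis using H c1 c2 unfolding As_def by auto
      qed
      from conjunct2[OF B[OF H cl], THEN mp, OF e]
      show "H \<in> {grp_center G, A, carrier G} \<union> sub_center G ` Ts \<union> As \<union> Ts"
      proof (elim disjE)
        assume sc: "Cz H = H \<and> card H = ?a"
        thus ?thesis using AsI nA by simp
      next
        assume "(H = grp_center G \<or> H = carrier G) \<and> p^4 * ?z = ?n"
        thus ?thesis by blast
      next
        assume a: "H \<subset> Cz H \<and> p * card (Cz H) = ?n \<and> p^2 * card H = card (Cz H)"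
        have sc: "sub_center G (Cz H) = H" unfolding sub_center_eq[OF cent_sub] cl using a by blast
        have "p^3 * card H = p * (p^2 * card H)" by (simp add: power2_eq_square power3_eq_cube)
        hence "?n = p^3 * card (sub_center G (Cz H))" using a sc by simp
        hence CT: "Cz H \<in> Ts" unfolding Ts_def using Ks a by simp
        have "H \<in> sub_center G ` Ts" using image_eqI[where f="sub_center G", OF sc[symmetric] CT] .
        thus ?thesis by blast
      next
        assume a: "Cz H \<subset> H \<and> p * card H = ?n \<and> p^2 * card (Cz H) = card H"
        have sc: "sub_center G H = Cz H" unfolding sub_center_eq[OF Hc] using a by blast
        have "p^3 * card (Cz H) = p * (p^2 * card (Cz H))" by (simp add: power2_eq_square power3_eq_cube)
        hence "?n = p^3 * card (sub_center G H)" using a sc by simp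
        hence "H \<in> Ts" unfolding Ts_def using H a by simp
        thus ?thesis by blast
      next
        assume "p^2 * card H = ?n \<and> p^2 * card (Cz H) = ?n \<and> H \<inter> Cz H \<subseteq> grp_center G \<and> p^4 * card (H \<inter> Cz H) = ?n"
        thus ?thesis using AsI by blast
      qed
    qed
    show "{grp_center G, A, carrier G} \<union> sub_center G ` Ts \<union> As \<union> Ts \<subseteq> CD G"
      using Zin Gin Ain Tin Bin by blast
  qed
  have cardAs: "card As \<ge> p" if ne: "Ts \<noteq> {}"
  proof -
    obtain T where T: "T \<in> Ts" using ne by blast
    have Ts: "subgroup T G" and c1: "?n = p * card T" and c2: "?n = p^3 * card (sub_center G T)"
      using T unfolding Ts_def by auto
    have Tc: "T \<subseteq> carrier G" using Ts subgroup.subset by blast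
    have TCD: "T \<in> CD G" using Tin[OF T] by blast
    have clT: "Cz (Cz T) = T" by (rule CD_closed[OF fin TCD])
    have ZT: "grp_center G \<subseteq> T" using center_sub_cent[OF cent_sub[of T]] clT by simp
    define Y where "Y = T \<inter> Cz T"
    have Yd: "Y = sub_center G T" unfolding Y_def sub_center_eq[OF Tc] ..
    have ZY: "grp_center G \<subseteq> Y" unfolding Y_def using ZT center_sub_cent[OF Tc] by blast
    have cT: "card T = p^2 * card Y"
    proof -
      have "p * card T = ?n" using c1 by simp
      also have "\<dots> = p^3 * card Y" using c2 Yd by simp
      also have "\<dots> = p * (p^2 * card Y)" by (simp add: power2_eq_square power3_eq_cube)
      finally show ?thesis using nat_mult_eq_cancel1[OF p0] by blast
    qed
    define F where "F = {B. subgroup B G \<and> Y \<subseteq> B \<and> B \<subseteq> T \<and> card B = p * card Y}"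
    note cnt = CNT[OF fin SP p2 Ts Y_def cT ZY]
    have fF: "finite F" using cnt(1) unfolding F_def .
    have cF: "card F = p + 1" using cnt(2) unfolding F_def .
    have sub: "F - {A} \<subseteq> As"
    proof
      fix Bx assume Bx: "Bx \<in> F - {A}"
      have Bs: "subgroup Bx G" and YB: "Y \<subseteq> Bx" and BT: "Bx \<subseteq> T" and cB: "card Bx = p * card Y" and ne: "Bx \<noteq> A"
        using Bx unfolding F_def by auto
      have Bc: "Bx \<subseteq> carrier G" using Bs subgroup.subset by blast
      have YC: "Y \<subseteq> Cz Bx" unfolding Y_def using cent_anti[OF BT] by blast
      have ab: "Bx \<subseteq> Cz Bx" by (rule AB[OF fin SP p2 Bs YB YC ZY cB])
      have nB: "?n = p^2 * card Bx" using c2 Yd cB by (simp add: power2_eq_square power3_eq_cube)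
      hence cBa: "card Bx = ?a" using nA p0 by simp
      have fC: "finite (Cz Bx)" using fin cent_sub finite_subset by blast
      have "card Bx \<le> card (Cz Bx)" using card_mono[OF fC ab] .
      moreover have "cd_measure G Bx \<le> ?a * ?a" using cd_max_ge[OF fin Bs] C(1) by simp
      hence "card (Cz Bx) \<le> card Bx" unfolding cd_measure_def using cBa sub_card_pos[OF fin A] by simp
      ultimately have "card (Cz Bx) = card Bx" by simp
      thus "Bx \<in> As" unfolding As_def using Bs ne nB by simp
    qed
    have fAs: "finite As"
    proof -
      have "As \<subseteq> Pow (carrier G)" unfolding As_def using subgroup.subset by blast
      thus ?thesis using fin finite_subset by blast
    qed
    have "card (F - {A}) \<ge> p" using cF fF by (simp add: card_Diff_singleton_if)
    thus ?thesis using card_mono[OF fAs sub] by simp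
  qed
  show ?thesis unfolding Let_def Ts_def[symmetric] As_def[symmetric] using CDe cardAs by blast
qed


lemma P4class:
  assumes fin: "finite (carrier G)" and SP: "SPp G p" and p2: "p \<ge> 2"
    and A: "subgroup A G" and Asc: "Cz A = A"
    and Amax: "\<forall>B. subgroup B G \<longrightarrow> Cz B = B \<longrightarrow> card B \<le> card A"
    and nA: "card (carrier G) = p^2 * card A" and gt: "p^4 * card (grp_center G) < card (carrier G)"
  shows "cd_max G = card A * card A"
    and "CD G = {H. subgroup H G \<and> Cz (Cz H) = H \<and> cd_measure G H = card A * card A}"
    and "H \<in> CD G \<Longrightarrow> (Cz H = H \<and> card H = card A) \<or>
     (H \<subset> Cz H \<and> p * card (Cz H) = card (carrier G) \<and> p^2 * card H = card (Cz H)) \<or>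
     (Cz H \<subset> H \<and> p * card H = card (carrier G) \<and> p^2 * card (Cz H) = card H)"
proof -
  let ?n = "card (carrier G)" and ?z = "card (grp_center G)" and ?a = "card A"
  have ge: "p^4 * ?z \<le> ?n" using gt by simp
  note B = P4bnd[OF fin SP p2 A Asc Amax nA ge]
  have bnd': "cd_measure G H \<le> ?a * ?a" if "subgroup H G" "Cz (Cz H) = H" for H
    using B[OF that] by (rule conjunct1)
  have eA: "cd_measure G A = ?a * ?a" unfolding cd_measure_def Asc ..
  note C = CD_from_closed[OF fin bnd' A eA]
  show "cd_max G = ?a * ?a" by (rule C(1))
  show C2: "CD G = {H. subgroup H G \<and> Cz (Cz H) = H \<and> cd_measure G H = ?a * ?a}" by (rule C(2))
  assume HC: "H \<in> CD G"
  hence H: "subgroup H G" and cl: "Cz (Cz H) = H" and e: "cd_measure G H = ?a * ?a" using C2 by auto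
  from conjunct2[OF B[OF H cl], THEN mp, OF e]
  show "(Cz H = H \<and> card H = ?a) \<or>
     (H \<subset> Cz H \<and> p * card (Cz H) = ?n \<and> p^2 * card H = card (Cz H)) \<or>
     (Cz H \<subset> H \<and> p * card H = ?n \<and> p^2 * card (Cz H) = card H)"
  proof (elim disjE)
    assume "(H = grp_center G \<or> H = carrier G) \<and> p^4 * ?z = ?n"
    thus ?thesis using gt by simp
  next
    assume a: "p^2 * card H = ?n \<and> p^2 * card (Cz H) = ?n \<and> H \<inter> Cz H \<subseteq> grp_center G \<and> p^4 * card (H \<inter> Cz H) = ?n"
    have "card (H \<inter> Cz H) \<le> ?z" using card_mono[OF sub_finite[OF fin center_subgroup]] a by blast
    hence "p^4 * card (H \<inter> Cz H) \<le> p^4 * ?z" by simp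
    thus ?thesis using a gt by simp
  qed auto
qed

lemma P4d:
  assumes fin: "finite (carrier G)" and SP: "SPp G p" and p2: "p \<ge> 2"
    and A: "subgroup A G" and Asc: "Cz A = A"
    and Amax: "\<forall>B. subgroup B G \<longrightarrow> Cz B = B \<longrightarrow> card B \<le> card A"
    and nA: "card (carrier G) = p^2 * card A" and gt: "p^4 * card (grp_center G) < card (carrier G)"
    and noT: "\<not> (\<exists>T. subgroup T G \<and> card (carrier G) = p * card T \<and>
                 card (carrier G) = p^3 * card (sub_center G T))"
  shows "CD G = {A}"
proof -
  let ?n = "card (carrier G)" and ?a = "card A"
  note P = P4class[OF fin SP p2 A Asc Amax nA gt]
  have p3: "p^3 * x = p * (p^2 * x)" for x :: nat by (simp add: power2_eq_square power3_eq_cube)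
  have onlysc: "Cz H = H \<and> card H = ?a" if HC: "H \<in> CD G" for H
  proof -
    have H: "subgroup H G" and cl: "Cz (Cz H) = H" using HC P(2) by auto
    have Hc: "H \<subseteq> carrier G" using H subgroup.subset by blast
    from P(3)[OF HC] show ?thesis
    proof (elim disjE)
      assume a: "H \<subset> Cz H \<and> p * card (Cz H) = ?n \<and> p^2 * card H = card (Cz H)"
      have sc: "sub_center G (Cz H) = H" unfolding sub_center_eq[OF cent_sub] cl using a by blast
      have "?n = p^3 * card (sub_center G (Cz H))" unfolding sc p3 using a by simp
      moreover have "?n = p * card (Cz H)" using a by simp
      ultimately have "subgroup (Cz H) G \<and> ?n = p * card (Cz H) \<and> ?n = p^3 * card (sub_center G (Cz H))"
        using cent_subgroup[OF Hc] by blast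
      hence False using noT by blast
      thus ?thesis ..
    next
      assume a: "Cz H \<subset> H \<and> p * card H = ?n \<and> p^2 * card (Cz H) = card H"
      have sc: "sub_center G H = Cz H" unfolding sub_center_eq[OF Hc] using a by blast
      have "?n = p^3 * card (sub_center G H)" unfolding sc p3 using a by simp
      moreover have "?n = p * card H" using a by simp
      ultimately have "subgroup H G \<and> ?n = p * card H \<and> ?n = p^3 * card (sub_center G H)"
        using H by blast
      hence False using noT by blast
      thus ?thesis ..
    qed
  qed
  have fA: "finite A" using sub_finite[OF fin A] .
  have ACD: "A \<in> CD G" using P(2) A Asc unfolding cd_measure_def by simp
  show ?thesis
  proof
    show "CD G \<subseteq> {A}"
    proof
      fix H assume HC: "H \<in> CD G"
      have cH: "card H = ?a" using onlysc[OF HC] by blast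
      have I: "H \<inter> A \<in> CD G" by (rule CD_inter[OF fin HC ACD])
      have "card (H \<inter> A) = ?a" using onlysc[OF I] by blast
      hence "H \<inter> A = A" using card_subset_eq[OF fA] by blast
      hence "A \<subseteq> H" by blast
      moreover have "finite H" using HC CD_iff sub_finite[OF fin] by blast
      ultimately have "A = H" using card_subset_eq cH by metis
      thus "H \<in> {A}" by simp
    qed
    show "{A} \<subseteq> CD G" using ACD by simp
  qed
qed


lemma P4c:
  assumes fin: "finite (carrier G)" and SP: "SPp G p" and p2: "p \<ge> 2"
    and A: "subgroup A G" and Asc: "Cz A = A"
    and Amax: "\<forall>B. subgroup B G \<longrightarrow> Cz B = B \<longrightarrow> card B \<le> card A"
    and nA: "card (carrier G) = p^2 * card A" and gt: "p^4 * card (grp_center G) < card (carrier G)"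
    and T: "subgroup T G" and c1: "card (carrier G) = p * card T"
    and c2: "card (carrier G) = p^3 * card (sub_center G T)"
  shows "\<exists>As :: nat \<Rightarrow> 'a set.
             CD G = {sub_center G T, A, T} \<union> As ` {1..p} \<and>
             quasi_antichain (CD G) (p + 1) \<and>
             (\<forall>j\<in>{1..p}. comm_group (G\<lparr>carrier := As j\<rparr>))"
proof -
  let ?n = "card (carrier G)" and ?z = "card (grp_center G)" and ?a = "card A"
  note P = P4class[OF fin SP p2 A Asc Amax nA gt]
  define Y where "Y = sub_center G T"
  let ?y = "card Y" and ?t = "card T"
  have p0: "p > 0" using p2 by simp
  have Tc: "T \<subseteq> carrier G" using T subgroup.subset by blast
  have Yeq: "Y = T \<inter> Cz T" unfolding Y_def sub_center_eq[OF Tc] ..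
  have Ys: "subgroup Y G" unfolding Yeq using subgroups_Inter_pair T cent_subgroup Tc by blast
  have ypos: "?y > 0" using sub_card_pos[OF fin Ys] .
  have npos: "?n > 0" using sub_card_pos[OF fin subgroup_self] .
  have apos: "?a > 0" using sub_card_pos[OF fin A] .
  have tpos: "?t > 0" using sub_card_pos[OF fin T] .
  have fC: "finite (Cz S)" for S using finite_subset[OF cent_sub fin] .
  have ny: "?n = p^3 * ?y" using c2 Y_def by simp
  have tY: "?t = p^2 * ?y"
  proof -
    have "p * ?t = ?n" using c1 by simp
    also have "\<dots> = p * (p^2 * ?y)" using ny by (simp add: power2_eq_square power3_eq_cube)
    finally show ?thesis using nat_mult_eq_cancel1[OF p0] by blast
  qed
  have aY: "?a = p * ?y"
  proof -
    have pp: "p^2 > 0" using p0 by simp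
    have "p^2 * ?a = ?n" using nA by simp
    also have "\<dots> = p^2 * (p * ?y)" using ny by (simp add: power2_eq_square power3_eq_cube)
    finally show ?thesis using nat_mult_eq_cancel1[OF pp] by blast
  qed
  have ty_aa: "?t * ?y = ?a * ?a" using tY aY by (simp add: power2_eq_square algebra_simps)
  have inCD: "H \<in> CD G" if H: "subgroup H G" and m: "?a * ?a \<le> cd_measure G H" for H
  proof -
    have le: "cd_measure G H \<le> cd_max G" by (rule cd_max_ge[OF fin H])
    have eq: "cd_measure G H = cd_max G" using le m unfolding P(1) by (rule antisym)
    show ?thesis unfolding CD_iff using H eq by (rule conjI)
  qed
  have TCD: "T \<in> CD G"
  proof (rule inCD[OF T])
    have "?y \<le> card (Cz T)" using card_mono[OF fC] Yeq by blast
    thus "?a * ?a \<le> cd_measure G T" unfolding cd_measure_def ty_aa[symmetric] by simp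
  qed
  have YCD: "Y \<in> CD G"
  proof (rule inCD[OF Ys])
    have "?t \<le> card (Cz Y)" using card_mono[OF fC subc_sub[OF Tc]] Y_def by blast
    thus "?a * ?a \<le> cd_measure G Y" unfolding cd_measure_def ty_aa[symmetric] by (simp add: mult.commute)
  qed
  have clT: "Cz (Cz T) = T" by (rule CD_closed[OF fin TCD])
  have CTY: "Cz T = Y"
  proof -
    from P(3)[OF TCD] show ?thesis
    proof (elim disjE)
      assume "Cz T = T \<and> card T = ?a"
      hence "p^2 * ?y = p * ?y" using tY aY by simp
      hence "p^2 = p" using ypos by simp
      thus ?thesis using p2 by (simp add: power2_eq_square)
    next
      assume a: "T \<subset> Cz T \<and> p * card (Cz T) = ?n \<and> p^2 * card T = card (Cz T)"
      hence "card T < card (Cz T)" using psubset_card_mono[OF fC] by blast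
      moreover have "card (Cz T) = card T" using a c1 p0 by simp
      ultimately show ?thesis by simp
    next
      assume "Cz T \<subset> T \<and> p * card T = ?n \<and> p^2 * card (Cz T) = card T"
      thus ?thesis unfolding Yeq by blast
    qed
  qed
  have CY: "Cz Y = T" using clT CTY by simp
  have ZT: "grp_center G \<subseteq> T" using center_sub_cent[OF cent_sub[of T]] clT by simp
  have ZY: "grp_center G \<subseteq> Y" using ZT center_sub_cent[OF Tc] Yeq by blast
  have Tuniq: "T' = T" if T'C: "T' \<in> CD G" and a1: "Cz T' \<subset> T'" and a2: "p * card T' = ?n"
      and a3: "p^2 * card (Cz T') = card T'" for T'
  proof (rule ccontr)
    assume ne: "T' \<noteq> T"
    have T's: "subgroup T' G" using T'C CD_iff by blast
    have T'c: "T' \<subseteq> carrier G" using T's subgroup.subset by blast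
    have ct': "card T' = ?t" using a2 c1 p0 by simp
    have nsub: "\<not> T' \<subseteq> T" using card_subset_eq[OF sub_finite[OF fin T]] ct' ne by blast
    have nsub2: "\<not> T \<subseteq> T'" using card_subset_eq[OF sub_finite[OF fin T's]] ct' ne by metis
    let ?I = "T \<inter> T'"
    have IC: "?I \<in> CD G" by (rule CD_inter[OF fin TCD T'C])
    have Is: "subgroup ?I G" using IC CD_iff by blast
    have Ipos: "card ?I > 0" using sub_card_pos[OF fin Is] .
    have "?t * ?t \<le> card (pset T T') * card ?I" using card_pset[OF fin T T's] ct' by simp
    also have "\<dots> \<le> ?n * card ?I" using card_mono[OF fin pset_sub[OF Tc T'c subgroup_self]] by simp
    finally have "?t * ?t \<le> (p * card ?I) * ?t" using c1 by (simp add: algebra_simps)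
    hence tI: "?t \<le> p * card ?I" using tpos by simp
    have IT: "?I \<subset> T" using nsub2 by blast
    have Ilt: "card ?I < ?t" using psubset_card_mono[OF sub_finite[OF fin T] IT] .
    have ICI: "Cz ?I = ?I"
    proof -
      from P(3)[OF IC] show ?thesis
      proof (elim disjE)
        assume "Cz ?I = ?I \<and> card ?I = ?a" thus ?thesis by blast
      next
        assume b: "?I \<subset> Cz ?I \<and> p * card (Cz ?I) = ?n \<and> p^2 * card ?I = card (Cz ?I)"
        have "p * (p * (p * card ?I)) = ?n" using b by (simp add: power2_eq_square algebra_simps)
        also have "\<dots> = p * ?t" using c1 .
        also have "\<dots> \<le> p * (p * card ?I)" using tI by simp
        finally have "p * (p * card ?I) * p \<le> p * (p * card ?I) * 1" by (simp add: algebra_simps)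
        hence "p \<le> 1" using p0 Ipos by (metis mult_le_cancel1 mult_pos_pos)
        thus ?thesis using p2 by simp
      next
        assume b: "Cz ?I \<subset> ?I \<and> p * card ?I = ?n \<and> p^2 * card (Cz ?I) = card ?I"
        hence "card ?I = ?t" using c1 p0 by simp
        thus ?thesis using Ilt by simp
      qed
    qed
    have cI: "p^2 * card ?I = ?n"
    proof -
      from P(3)[OF IC] have "card ?I = ?a \<or> ?I \<subset> Cz ?I \<or> Cz ?I \<subset> ?I" by blast
      thus ?thesis using ICI nA by auto
    qed
    have YI: "Y \<subseteq> ?I" using cent_anti[of ?I T] ICI CTY by blast
    have Y'I: "Cz T' \<subseteq> ?I" using cent_anti[of ?I T'] ICI by blast
    have cY': "card (Cz T') = ?y"
    proof -
      have "p^2 * card (Cz T') = p^2 * ?y" using a3 ct' tY by simp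
      thus ?thesis using p0 by simp
    qed
    have YY'Z: "Y \<inter> Cz T' \<subseteq> grp_center G"
    proof
      fix x assume x: "x \<in> Y \<inter> Cz T'"
      have xT: "x \<in> Cz T" using x CTY by blast
      have xc: "x \<in> carrier G" using xT cent_sub by blast
      have sub: "T \<union> T' \<subseteq> Cz {x}"
      proof
        fix w assume w: "w \<in> T \<union> T'"
        have wc: "w \<in> carrier G" using w Tc T'c by blast
        have xT': "x \<in> Cz T'" using x by blast
        have "x \<otimes> w = w \<otimes> x" using w xT xT' unfolding cent_iff by blast
        thus "w \<in> Cz {x}" using wc unfolding cent_iff by simp
      qed
      have Cs: "subgroup (Cz {x}) G" using cent_subgroup xc by blast
      have "T \<subset> Cz {x}" using sub nsub by blast
      hence "p * ?t \<le> card (Cz {x})" using SP T Cs ZT unfolding SPp_def by blast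
      moreover have "card (Cz {x}) \<le> ?n" using card_mono[OF fin cent_sub] .
      ultimately have "card (Cz {x}) = ?n" using c1 by simp
      hence "Cz {x} = carrier G" using card_subset_eq[OF fin cent_sub] by blast
      thus "x \<in> grp_center G" using cent_single_center xc by blast
    qed
    have Y's: "subgroup (Cz T') G" using cent_subgroup T'c by blast
    have "?y * ?y \<le> card (pset Y (Cz T')) * card (Y \<inter> Cz T')" using card_pset[OF fin Ys Y's] cY' by simp
    also have "\<dots> \<le> card ?I * ?z"
      using card_mono[OF sub_finite[OF fin Is] pset_sub[OF YI Y'I Is]]
        card_mono[OF sub_finite[OF fin center_subgroup] YY'Z] by (rule mult_le_mono)
    finally have yy: "?y * ?y \<le> card ?I * ?z" .
    have "?n * ?n = p^4 * (p^2 * (?y * ?y))" using ny by (simp add: power2_eq_square power3_eq_cube power4_eq_xxxx algebra_simps)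
    also have "\<dots> \<le> p^4 * (p^2 * (card ?I * ?z))" using yy by simp
    also have "\<dots> = ?n * (p^4 * ?z)" using cI by (simp add: algebra_simps)
    finally have "?n * ?n \<le> ?n * (p^4 * ?z)" .
    hence "?n \<le> p^4 * ?z" using npos by simp
    thus False using gt by simp
  qed
  have Yuniq: "H = Y" if HC: "H \<in> CD G" and a1: "H \<subset> Cz H" and a2: "p * card (Cz H) = ?n"
      and a3: "p^2 * card H = card (Cz H)" for H
  proof -
    have KC: "Cz H \<in> CD G" by (rule CD_cent[OF fin HC])
    have clH: "Cz (Cz H) = H" by (rule CD_closed[OF fin HC])
    have "Cz H = T" using Tuniq[OF KC] a1 a2 a3 clH by simp
    thus ?thesis using clH CTY by simp
  qed
  define F where "F = {B. subgroup B G \<and> Y \<subseteq> B \<and> B \<subseteq> T \<and> card B = p * card Y}"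
  have scF: "B \<in> F" if BC: "B \<in> CD G" and sc: "Cz B = B" and cB: "card B = ?a" for B
  proof -
    have Bs: "subgroup B G" using BC CD_iff by blast
    have BT: "B \<subseteq> T"
    proof (rule ccontr)
      assume nBT: "\<not> B \<subseteq> T"
      let ?J = "B \<inter> T"
      have JC: "?J \<in> CD G" by (rule CD_inter[OF fin BC TCD])
      have JB: "?J \<subset> B" using nBT by blast
      have Jlt: "card ?J < ?a" using psubset_card_mono[OF sub_finite[OF fin Bs] JB] cB by simp
      from P(3)[OF JC] show False
      proof (elim disjE)
        assume "Cz ?J = ?J \<and> card ?J = ?a" thus False using Jlt by simp
      next
        assume b: "?J \<subset> Cz ?J \<and> p * card (Cz ?J) = ?n \<and> p^2 * card ?J = card (Cz ?J)"
        have "?J = Y" using Yuniq[OF JC] b by blast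
        hence "Cz ?J = T" using CY by simp
        moreover have "B \<subseteq> Cz ?J" using cent_anti[of ?J B] sc by blast
        ultimately show False using nBT by simp
      next
        assume b: "Cz ?J \<subset> ?J \<and> p * card ?J = ?n \<and> p^2 * card (Cz ?J) = card ?J"
        have "p * card ?J = ?n" using b by simp
        also have "\<dots> = p * (p * ?a)" using nA by (simp add: power2_eq_square)
        finally have "card ?J = p * ?a" using nat_mult_eq_cancel1[OF p0] by blast
        moreover have "?a \<le> p * ?a" using p0 by simp
        ultimately show False using Jlt by linarith
      qed
    qed
    have YB: "Y \<subseteq> B" using cent_anti[OF BT] sc CTY by simp
    show ?thesis unfolding F_def using Bs YB BT cB aY by simp
  qed
  have Fab: "B \<subseteq> Cz B" if B: "B \<in> F" for B
  proof -
    have Bs: "subgroup B G" and YB: "Y \<subseteq> B" and BT: "B \<subseteq> T" and cB: "card B = p * ?y"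
      using B unfolding F_def by auto
    have YC: "Y \<subseteq> Cz B" using cent_anti[OF BT] CTY by simp
    show ?thesis by (rule AB[OF fin SP p2 Bs YB YC ZY cB])
  qed
  have FCD: "B \<in> CD G" if B: "B \<in> F" for B
  proof -
    have Bs: "subgroup B G" and cB: "card B = p * ?y" using B unfolding F_def by auto
    have "card B \<le> card (Cz B)" using card_mono[OF fC Fab[OF B]] .
    hence "card B * card B \<le> card B * card (Cz B)" by simp
    thus ?thesis using inCD[OF Bs] cB aY unfolding cd_measure_def by simp
  qed
  have CDe: "CD G = {Y, T} \<union> F"
  proof
    show "CD G \<subseteq> {Y, T} \<union> F"
    proof
      fix H assume HC: "H \<in> CD G"
      from P(3)[OF HC] show "H \<in> {Y, T} \<union> F"
      proof (elim disjE)
        assume "Cz H = H \<and> card H = ?a" thus ?thesis using scF[OF HC] by blast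
      next
        assume "H \<subset> Cz H \<and> p * card (Cz H) = ?n \<and> p^2 * card H = card (Cz H)"
        thus ?thesis using Yuniq[OF HC] by blast
      next
        assume "Cz H \<subset> H \<and> p * card H = ?n \<and> p^2 * card (Cz H) = card H"
        thus ?thesis using Tuniq[OF HC] by blast
      qed
    qed
    show "{Y, T} \<union> F \<subseteq> CD G" using YCD TCD FCD by blast
  qed
  have ACD: "A \<in> CD G" using P(2) A Asc unfolding cd_measure_def by simp
  have AF: "A \<in> F" using scF[OF ACD Asc] by simp
  note cnt = CNT[OF fin SP p2 T Yeq tY ZY]
  have fF: "finite F" using cnt(1) unfolding F_def .
  have cF: "card F = p + 1" using cnt(2) unfolding F_def .
  have YT: "Y \<noteq> T"
  proof
    assume "Y = T" hence "?y = p^2 * ?y" using tY by simp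
    thus False using ypos p2 by (simp add: power2_eq_square)
  qed
  have YF: "Y \<notin> F"
  proof
    assume "Y \<in> F" hence "?y = p * ?y" unfolding F_def by blast
    thus False using ypos p2 by simp
  qed
  have TF: "T \<notin> F"
  proof
    assume "T \<in> F" hence "?t = p * ?y" unfolding F_def by blast
    thus False using tY ypos p2 by (simp add: power2_eq_square)
  qed
  have sub: "\<forall>B\<in>F. Y \<subseteq> B \<and> B \<subseteq> T" unfolding F_def by blast
  have YsubT: "Y \<subseteq> T" using Yeq by blast
  have inc: "\<forall>B\<in>F. \<forall>B'\<in>F. B \<subseteq> B' \<longrightarrow> B = B'"
  proof (intro ballI impI)
    fix B B' assume B: "B \<in> F" and B': "B' \<in> F" and s: "B \<subseteq> B'"
    have "finite B'" "card B = card B'" using B B' sub_finite[OF fin] unfolding F_def by auto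
    thus "B = B'" using card_subset_eq[OF _ s] by simp
  qed
  obtain As where As: "{Y, T} \<union> F = {Y, A, T} \<union> As ` {1..p}"
    and Q: "quasi_antichain ({Y, T} \<union> F) (p + 1)" and AsF: "\<forall>i\<in>{1..p}. As i \<in> F"
    using QA[OF fF cF AF YT YF TF sub YsubT inc] by blast
  have "\<forall>i\<in>{1..p}. comm_group (G\<lparr>carrier := As i\<rparr>)"
  proof
    fix i assume "i \<in> {1..p}"
    hence B: "As i \<in> F" using AsF by blast
    have "subgroup (As i) G" using B unfolding F_def by blast
    thus "comm_group (G\<lparr>carrier := As i\<rparr>)" using comm_sub Fab[OF B] by simp
  qed
  thus ?thesis unfolding CDe Y_def[symmetric] using As Q by auto
qed

end

theorem theorem2p1:
  fixes G :: "('a, 'b) monoid_scheme" and p :: nat and A :: "'a set"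
  assumes grp: "group G" and fin: "finite (carrier G)" and pr: "Factorial_Ring.prime p"
    and A_sub: "subgroup A G" and A_sc: "centralizer G A = A"
    and A_max: "\<And>B. subgroup B G \<Longrightarrow> centralizer G B = B \<Longrightarrow> card B \<le> card A"
  shows
  \<comment> \<open>(1)\<close>
  "(comm_group G \<longrightarrow> CD G = {carrier G})
  \<comment> \<open>(2)\<close>
   \<and> (card (carrier G) = p^2 * card (grp_center G) \<longrightarrow>
       (\<exists>As :: nat \<Rightarrow> 'a set.
          CD G = {grp_center G, A, carrier G} \<union> As ` {1..p} \<and>
          quasi_antichain (CD G) (p + 1) \<and>
          (\<forall>i\<in>{1..p}. comm_group (G\<lparr>carrier := As i\<rparr>))))
  \<comment> \<open>(3)\<close>
   \<and> (\<forall>i::nat. card (carrier G) = p * card A \<and> card (carrier G) = p^i * card (grp_center G) \<and> i > 2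
         \<longrightarrow> CD G = {A})
   \<and> (smallest_prime_divisor p (card (carrier G)) \<and> card (carrier G) = p * card A \<and>
       card (carrier G) > p^2 * card (grp_center G) \<longrightarrow> CD G = {A})
  \<comment> \<open>(4)\<close>
   \<and> (card (carrier G) = p^2 * card A \<longrightarrow>
      \<comment> \<open>(4a)\<close>
      (card (carrier G) = p^3 * card (grp_center G) \<longrightarrow> CD G = {grp_center G, carrier G})
    \<and> (smallest_prime_divisor p (card (carrier G)) \<and>
        p^2 * card (grp_center G) < card (carrier G) \<and> card (carrier G) < p^4 * card (grp_center G)
        \<longrightarrow> CD G = {grp_center G, carrier G})
      \<comment> \<open>(4b)\<close>
    \<and> (card (carrier G) = p^4 * card (grp_center G) \<longrightarrow>
        (let Ts = {T. subgroup T G \<and> card (carrier G) = p * card T \<and>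
                      card (carrier G) = p^3 * card (sub_center G T)};
             As = {B. subgroup B G \<and> B \<noteq> A \<and> card (carrier G) = p^2 * card B \<and>
                      card (carrier G) = p^2 * card (centralizer G B)}
         in CD G = {grp_center G, A, carrier G} \<union> sub_center G ` Ts \<union> As \<union> Ts \<and>
            (Ts \<noteq> {} \<longrightarrow> card As \<ge> p)))
      \<comment> \<open>(4c)\<close>
    \<and> (\<forall>i::nat. \<forall>T. card (carrier G) = p^i * card (grp_center G) \<and> i > 4 \<and>
          subgroup T G \<and> card (carrier G) = p * card T \<and>
          card (carrier G) = p^3 * card (sub_center G T) \<longrightarrow>
          (\<exists>As :: nat \<Rightarrow> 'a set.
             CD G = {sub_center G T, A, T} \<union> As ` {1..p} \<and>
             quasi_antichain (CD G) (p + 1) \<and>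
             (\<forall>j\<in>{1..p}. comm_group (G\<lparr>carrier := As j\<rparr>))))
    \<and> (\<forall>T. smallest_prime_divisor p (card (carrier G)) \<and>
          card (carrier G) > p^4 * card (grp_center G) \<and>
          subgroup T G \<and> card (carrier G) = p * card T \<and>
          card (carrier G) = p^3 * card (sub_center G T) \<longrightarrow>
          (\<exists>As :: nat \<Rightarrow> 'a set.
             CD G = {sub_center G T, A, T} \<union> As ` {1..p} \<and>
             quasi_antichain (CD G) (p + 1) \<and>
             (\<forall>j\<in>{1..p}. comm_group (G\<lparr>carrier := As j\<rparr>))))
      \<comment> \<open>(4d)\<close>
    \<and> (\<forall>i::nat. card (carrier G) = p^i * card (grp_center G) \<and> i > 4 \<and>
          \<not> (\<exists>T. subgroup T G \<and> card (carrier G) = p * card T \<and>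
                 card (carrier G) = p^3 * card (sub_center G T))
          \<longrightarrow> CD G = {A})
    \<and> (smallest_prime_divisor p (card (carrier G)) \<and>
          card (carrier G) > p^4 * card (grp_center G) \<and>
          \<not> (\<exists>T. subgroup T G \<and> card (carrier G) = p * card T \<and>
                 card (carrier G) = p^3 * card (sub_center G T))
          \<longrightarrow> CD G = {A}))"
proof -
  interpret group G by (rule grp)
  let ?n = "card (carrier G)" and ?z = "card (grp_center G)"
  have p2: "p \<ge> 2" using pr prime_ge_2_nat by blast
  have p0: "p > 0" using p2 by simp
  have zpos: "?z > 0" using sub_card_pos[OF fin center_subgroup] .
  have Amax': "\<forall>B. subgroup B G \<longrightarrow> centralizer G B = B \<longrightarrow> card B \<le> card A" using A_max by blast
  have powlt: "p^a * ?z < p^b * ?z" if "a < b" for a b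
  proof -
    have "p^a < p^b" using that p2 by (intro power_strict_increasing) auto
    thus ?thesis using zpos by simp
  qed
  have part1: "comm_group G \<longrightarrow> CD G = {carrier G}" using P1[OF fin] by blast
  have part2: "card (carrier G) = p^2 * card (grp_center G) \<longrightarrow>
       (\<exists>As :: nat \<Rightarrow> 'a set.
          CD G = {grp_center G, A, carrier G} \<union> As ` {1..p} \<and>
          quasi_antichain (CD G) (p + 1) \<and>
          (\<forall>i\<in>{1..p}. comm_group (G\<lparr>carrier := As i\<rparr>)))"
    using P2[OF fin pr A_sub A_sc A_max] by blast
  have part3a: "\<forall>i::nat. card (carrier G) = p * card A \<and> card (carrier G) = p^i * card (grp_center G) \<and> i > 2
         \<longrightarrow> CD G = {A}"
  proof (intro allI impI)
    fix i assume a: "card (carrier G) = p * card A \<and> card (carrier G) = p^i * card (grp_center G) \<and> i > 2"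
    have SP: "SPp G p" using SP_pow[OF fin pr] a by blast
    have lt0: "p^2 * ?z < p^i * ?z" by (rule powlt) (use a in simp)
    have ni: "?n = p^i * ?z" using a by blast
    have "p^2 * ?z < ?n" using lt0 ni by linarith
    thus "CD G = {A}" using P3[OF fin SP p2 A_sub A_sc A_max] a by blast
  qed
  have part3b: "smallest_prime_divisor p (card (carrier G)) \<and> card (carrier G) = p * card A \<and>
       card (carrier G) > p^2 * card (grp_center G) \<longrightarrow> CD G = {A}"
  proof
    assume a: "smallest_prime_divisor p (card (carrier G)) \<and> card (carrier G) = p * card A \<and>
       card (carrier G) > p^2 * card (grp_center G)"
    have SP: "SPp G p" using SP_small[OF fin] a by blast
    show "CD G = {A}" using P3[OF fin SP p2 A_sub A_sc A_max] a by blast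
  qed
  have part4: "card (carrier G) = p^2 * card A \<longrightarrow>
      (card (carrier G) = p^3 * card (grp_center G) \<longrightarrow> CD G = {grp_center G, carrier G})
    \<and> (smallest_prime_divisor p (card (carrier G)) \<and>
        p^2 * card (grp_center G) < card (carrier G) \<and> card (carrier G) < p^4 * card (grp_center G)
        \<longrightarrow> CD G = {grp_center G, carrier G})
    \<and> (card (carrier G) = p^4 * card (grp_center G) \<longrightarrow>
        (let Ts = {T. subgroup T G \<and> card (carrier G) = p * card T \<and>
                      card (carrier G) = p^3 * card (sub_center G T)};
             As = {B. subgroup B G \<and> B \<noteq> A \<and> card (carrier G) = p^2 * card B \<and>
                      card (carrier G) = p^2 * card (centralizer G B)}
         in CD G = {grp_center G, A, carrier G} \<union> sub_center G ` Ts \<union> As \<union> Ts \<and>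
            (Ts \<noteq> {} \<longrightarrow> card As \<ge> p)))
    \<and> (\<forall>i::nat. \<forall>T. card (carrier G) = p^i * card (grp_center G) \<and> i > 4 \<and>
          subgroup T G \<and> card (carrier G) = p * card T \<and>
          card (carrier G) = p^3 * card (sub_center G T) \<longrightarrow>
          (\<exists>As :: nat \<Rightarrow> 'a set.
             CD G = {sub_center G T, A, T} \<union> As ` {1..p} \<and>
             quasi_antichain (CD G) (p + 1) \<and>
             (\<forall>j\<in>{1..p}. comm_group (G\<lparr>carrier := As j\<rparr>))))
    \<and> (\<forall>T. smallest_prime_divisor p (card (carrier G)) \<and>
          card (carrier G) > p^4 * card (grp_center G) \<and>
          subgroup T G \<and> card (carrier G) = p * card T \<and>
          card (carrier G) = p^3 * card (sub_center G T) \<longrightarrow>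
          (\<exists>As :: nat \<Rightarrow> 'a set.
             CD G = {sub_center G T, A, T} \<union> As ` {1..p} \<and>
             quasi_antichain (CD G) (p + 1) \<and>
             (\<forall>j\<in>{1..p}. comm_group (G\<lparr>carrier := As j\<rparr>))))
    \<and> (\<forall>i::nat. card (carrier G) = p^i * card (grp_center G) \<and> i > 4 \<and>
          \<not> (\<exists>T. subgroup T G \<and> card (carrier G) = p * card T \<and>
                 card (carrier G) = p^3 * card (sub_center G T))
          \<longrightarrow> CD G = {A})
    \<and> (smallest_prime_divisor p (card (carrier G)) \<and>
          card (carrier G) > p^4 * card (grp_center G) \<and>
          \<not> (\<exists>T. subgroup T G \<and> card (carrier G) = p * card T \<and>
                 card (carrier G) = p^3 * card (sub_center G T))
          \<longrightarrow> CD G = {A})"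
  proof
    assume nA: "card (carrier G) = p^2 * card A"
    have a1: "card (carrier G) = p^3 * card (grp_center G) \<longrightarrow> CD G = {grp_center G, carrier G}"
    proof
      assume a: "card (carrier G) = p^3 * card (grp_center G)"
      have SP: "SPp G p" using SP_pow[OF fin pr a] .
      have "p^3 * ?z < p^4 * ?z" by (rule powlt) simp
      hence "?n < p^4 * ?z" using a by linarith
      thus "CD G = {grp_center G, carrier G}" using P4a[OF fin SP p2 A_sub A_sc A_max nA] by blast
    qed
    have a2: "smallest_prime_divisor p (card (carrier G)) \<and>
        p^2 * card (grp_center G) < card (carrier G) \<and> card (carrier G) < p^4 * card (grp_center G)
        \<longrightarrow> CD G = {grp_center G, carrier G}"
    proof
      assume a: "smallest_prime_divisor p (card (carrier G)) \<and>
        p^2 * card (grp_center G) < card (carrier G) \<and> card (carrier G) < p^4 * card (grp_center G)"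
      have SP: "SPp G p" using SP_small[OF fin] a by blast
      show "CD G = {grp_center G, carrier G}" using P4a[OF fin SP p2 A_sub A_sc A_max nA] a by blast
    qed
    have b: "card (carrier G) = p^4 * card (grp_center G) \<longrightarrow>
        (let Ts = {T. subgroup T G \<and> card (carrier G) = p * card T \<and>
                      card (carrier G) = p^3 * card (sub_center G T)};
             As = {B. subgroup B G \<and> B \<noteq> A \<and> card (carrier G) = p^2 * card B \<and>
                      card (carrier G) = p^2 * card (centralizer G B)}
         in CD G = {grp_center G, A, carrier G} \<union> sub_center G ` Ts \<union> As \<union> Ts \<and>
            (Ts \<noteq> {} \<longrightarrow> card As \<ge> p))"
      using P4b[OF fin pr A_sub A_sc A_max nA] by blast
    have c1: "\<forall>i::nat. \<forall>T. card (carrier G) = p^i * card (grp_center G) \<and> i > 4 \<and>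
          subgroup T G \<and> card (carrier G) = p * card T \<and>
          card (carrier G) = p^3 * card (sub_center G T) \<longrightarrow>
          (\<exists>As :: nat \<Rightarrow> 'a set.
             CD G = {sub_center G T, A, T} \<union> As ` {1..p} \<and>
             quasi_antichain (CD G) (p + 1) \<and>
             (\<forall>j\<in>{1..p}. comm_group (G\<lparr>carrier := As j\<rparr>)))"
    proof (intro allI impI)
      fix i T assume a: "card (carrier G) = p^i * card (grp_center G) \<and> i > 4 \<and>
          subgroup T G \<and> card (carrier G) = p * card T \<and>
          card (carrier G) = p^3 * card (sub_center G T)"
      have SP: "SPp G p" using SP_pow[OF fin pr] a by blast
      have lt0: "p^4 * ?z < p^i * ?z" by (rule powlt) (use a in simp)
      have ni: "?n = p^i * ?z" using a by blast
      have gt: "p^4 * ?z < ?n" using lt0 ni by linarith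
      show "\<exists>As :: nat \<Rightarrow> 'a set.
             CD G = {sub_center G T, A, T} \<union> As ` {1..p} \<and>
             quasi_antichain (CD G) (p + 1) \<and>
             (\<forall>j\<in>{1..p}. comm_group (G\<lparr>carrier := As j\<rparr>))"
        using P4c[OF fin SP p2 A_sub A_sc Amax' nA gt] a by blast
    qed
    have c2: "\<forall>T. smallest_prime_divisor p (card (carrier G)) \<and>
          card (carrier G) > p^4 * card (grp_center G) \<and>
          subgroup T G \<and> card (carrier G) = p * card T \<and>
          card (carrier G) = p^3 * card (sub_center G T) \<longrightarrow>
          (\<exists>As :: nat \<Rightarrow> 'a set.
             CD G = {sub_center G T, A, T} \<union> As ` {1..p} \<and>
             quasi_antichain (CD G) (p + 1) \<and>
             (\<forall>j\<in>{1..p}. comm_group (G\<lparr>carrier := As j\<rparr>)))"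
    proof (intro allI impI)
      fix T assume a: "smallest_prime_divisor p (card (carrier G)) \<and>
          card (carrier G) > p^4 * card (grp_center G) \<and>
          subgroup T G \<and> card (carrier G) = p * card T \<and>
          card (carrier G) = p^3 * card (sub_center G T)"
      have SP: "SPp G p" using SP_small[OF fin] a by blast
      have gt: "p^4 * ?z < ?n" using a by simp
      show "\<exists>As :: nat \<Rightarrow> 'a set.
             CD G = {sub_center G T, A, T} \<union> As ` {1..p} \<and>
             quasi_antichain (CD G) (p + 1) \<and>
             (\<forall>j\<in>{1..p}. comm_group (G\<lparr>carrier := As j\<rparr>))"
        using P4c[OF fin SP p2 A_sub A_sc Amax' nA gt] a by blast
    qed
    have d1: "\<forall>i::nat. card (carrier G) = p^i * card (grp_center G) \<and> i > 4 \<and>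
          \<not> (\<exists>T. subgroup T G \<and> card (carrier G) = p * card T \<and>
                 card (carrier G) = p^3 * card (sub_center G T))
          \<longrightarrow> CD G = {A}"
    proof (intro allI impI)
      fix i assume a: "card (carrier G) = p^i * card (grp_center G) \<and> i > 4 \<and>
          \<not> (\<exists>T. subgroup T G \<and> card (carrier G) = p * card T \<and>
                 card (carrier G) = p^3 * card (sub_center G T))"
      have SP: "SPp G p" using SP_pow[OF fin pr] a by blast
      have lt0: "p^4 * ?z < p^i * ?z" by (rule powlt) (use a in simp)
      have ni: "?n = p^i * ?z" using a by blast
      have gt: "p^4 * ?z < ?n" using lt0 ni by linarith
      show "CD G = {A}" using P4d[OF fin SP p2 A_sub A_sc Amax' nA gt] a by blast
    qed
    have d2: "smallest_prime_divisor p (card (carrier G)) \<and>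
          card (carrier G) > p^4 * card (grp_center G) \<and>
          \<not> (\<exists>T. subgroup T G \<and> card (carrier G) = p * card T \<and>
                 card (carrier G) = p^3 * card (sub_center G T))
          \<longrightarrow> CD G = {A}"
    proof
      assume a: "smallest_prime_divisor p (card (carrier G)) \<and>
          card (carrier G) > p^4 * card (grp_center G) \<and>
          \<not> (\<exists>T. subgroup T G \<and> card (carrier G) = p * card T \<and>
                 card (carrier G) = p^3 * card (sub_center G T))"
      have SP: "SPp G p" using SP_small[OF fin] a by blast
      have gt: "p^4 * ?z < ?n" using a by simp
      show "CD G = {A}" using P4d[OF fin SP p2 A_sub A_sc Amax' nA gt] a by blast
    qed
    show "(card (carrier G) = p^3 * card (grp_center G) \<longrightarrow> CD G = {grp_center G, carrier G})
    \<and> (smallest_prime_divisor p (card (carrier G)) \<and>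
        p^2 * card (grp_center G) < card (carrier G) \<and> card (carrier G) < p^4 * card (grp_center G)
        \<longrightarrow> CD G = {grp_center G, carrier G})
    \<and> (card (carrier G) = p^4 * card (grp_center G) \<longrightarrow>
        (let Ts = {T. subgroup T G \<and> card (carrier G) = p * card T \<and>
                      card (carrier G) = p^3 * card (sub_center G T)};
             As = {B. subgroup B G \<and> B \<noteq> A \<and> card (carrier G) = p^2 * card B \<and>
                      card (carrier G) = p^2 * card (centralizer G B)}
         in CD G = {grp_center G, A, carrier G} \<union> sub_center G ` Ts \<union> As \<union> Ts \<and>
            (Ts \<noteq> {} \<longrightarrow> card As \<ge> p)))
    \<and> (\<forall>i::nat. \<forall>T. card (carrier G) = p^i * card (grp_center G) \<and> i > 4 \<and>
          subgroup T G \<and> card (carrier G) = p * card T \<and>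
          card (carrier G) = p^3 * card (sub_center G T) \<longrightarrow>
          (\<exists>As :: nat \<Rightarrow> 'a set.
             CD G = {sub_center G T, A, T} \<union> As ` {1..p} \<and>
             quasi_antichain (CD G) (p + 1) \<and>
             (\<forall>j\<in>{1..p}. comm_group (G\<lparr>carrier := As j\<rparr>))))
    \<and> (\<forall>T. smallest_prime_divisor p (card (carrier G)) \<and>
          card (carrier G) > p^4 * card (grp_center G) \<and>
          subgroup T G \<and> card (carrier G) = p * card T \<and>
          card (carrier G) = p^3 * card (sub_center G T) \<longrightarrow>
          (\<exists>As :: nat \<Rightarrow> 'a set.
             CD G = {sub_center G T, A, T} \<union> As ` {1..p} \<and>
             quasi_antichain (CD G) (p + 1) \<and>
             (\<forall>j\<in>{1..p}. comm_group (G\<lparr>carrier := As j\<rparr>))))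
    \<and> (\<forall>i::nat. card (carrier G) = p^i * card (grp_center G) \<and> i > 4 \<and>
          \<not> (\<exists>T. subgroup T G \<and> card (carrier G) = p * card T \<and>
                 card (carrier G) = p^3 * card (sub_center G T))
          \<longrightarrow> CD G = {A})
    \<and> (smallest_prime_divisor p (card (carrier G)) \<and>
          card (carrier G) > p^4 * card (grp_center G) \<and>
          \<not> (\<exists>T. subgroup T G \<and> card (carrier G) = p * card T \<and>
                 card (carrier G) = p^3 * card (sub_center G T))
          \<longrightarrow> CD G = {A})"
      using a1 a2 b c1 c2 d1 d2 by (intro conjI)
  qed
  show ?thesis using part1 part2 part3a part3b part4 by (intro conjI)
qed

end
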